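(* Let $p$ be a prime. Two $n$-tuples $\mathbf A$ and $\mathbf A'$ of $m\times m$ skew-symmetric matrices over $\mathbb F_p$ define isomorphic nilpotent Chernikov $p$-groups $G(\mathbf A)\cong G(\mathbf A')$ (with top $H_m$ and bottom $M^{(n)}$) if and only if $\mathbf A$ and $\mathbf A'$ are weakly congruent.
   Context: $M^{(n)}$ is the direct sum of $n$ quasi-cyclic $p$-groups; fix elements $a_1,\dots,a_n$ of order $p$ generating $M_p^{(n)}=\{a\in M^{(n)}:pa=0\}\cong\mathbb F_p^n$. $H_m$ is the elementary abelian $p$-group of rank $m$. A matrix is skew-symmetric if it is the matrix of a bilinear form $B$ with $B(x,x)=0$ for all $x$. For an $n$-tuple $\mathbf A=(A_1,\dots,A_n)$ of $m\times m$ skew-symmetric matrices over $\mathbb F_p$, with $A_k=(t^{(k)}_{ij})$, the group $G(\mathbf A)$ is the group (written additively) generated by $M^{(n)}$ and elements $\bar h_1,\dots,\bar h_m$ subject to the relations $\bar h_i+a=a+\bar h_i$ for all $a\in M^{(n)}$, $p\bar h_i=0$, and $[\bar h_i,\bar h_j]=\sum_{k=1}^n t^{(k)}_{ij}a_k$ for all $i,j$, where $[u,v]=u+v-u-v$; it is a nilpotent Chernikov $p$-group with top $H_m$ and bottom $M^{(n)}$. For $Q=(q_{ij})\in\mathrm{GL}(n,\mathbb F_p)$ put $\mathbf A\circ Q=(A'_1,\dots,A'_n)$ with $A'_j=\sum_{i=1}^n q_{ij}A_i$; for $P\in\mathrm{GL}(m,\mathbb F_p)$ put $P\circ\mathbf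 A=(PA_1P^\top,\dots,PA_nP^\top)$. Two $n$-tuples $\mathbf A,\mathbf A'$ are weakly congruent if $\mathbf A'=P\circ\mathbf A\circ Q$ for some invertible $P,Q$. *)

theory Defs
  imports Complex_Main "HOL-Algebra.Group" "HOL-Number_Theory.Cong"
begin

text \<open>The quasi-cyclic (Pruefer) p-group Z(p^infinity), realised as the rationals in [0,1)
  whose denominator is a power of p, with addition modulo 1.\<close>
definition prufer_carrier :: "nat \<Rightarrow> rat set" where
  "prufer_carrier p = {q. 0 \<le> q \<and> q < 1 \<and> (\<exists>e::nat. q * of_nat (p ^ e) \<in> \<int>)}"

text \<open>An n-tuple of m x m matrices over F_p: A k i j is the (i,j) entry of A_k (k < n, i,j < m),
  integers read modulo p.  A matrix is skew-symmetric if its bilinear form B satisfies B(x,x)=0.\<close>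
definition skew_symmetric_mod :: "nat \<Rightarrow> nat \<Rightarrow> (nat \<Rightarrow> nat \<Rightarrow> int) \<Rightarrow> bool" where
  "skew_symmetric_mod p m T \<longleftrightarrow>
     (\<forall>x :: nat \<Rightarrow> int. [(\<Sum>i<m. \<Sum>j<m. x i * T i j * x j) = 0] (mod int p))"

definition skew_tuple :: "nat \<Rightarrow> nat \<Rightarrow> nat \<Rightarrow> (nat \<Rightarrow> nat \<Rightarrow> nat \<Rightarrow> int) \<Rightarrow> bool" where
  "skew_tuple p n m A \<longleftrightarrow> (\<forall>k<n. skew_symmetric_mod p m (A k))"

definition invertible_mod :: "nat \<Rightarrow> nat \<Rightarrow> (nat \<Rightarrow> nat \<Rightarrow> int) \<Rightarrow> bool" where
  "invertible_mod p d P \<longleftrightarrow> (\<exists>P' :: nat \<Rightarrow> nat \<Rightarrow> int. \<forall>i<d. \<forall>j<d.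
     [(\<Sum>l<d. P i l * P' l j) = (if i = j then 1 else 0)] (mod int p) \<and>
     [(\<Sum>l<d. P' i l * P l j) = (if i = j then 1 else 0)] (mod int p))"

definition weakly_congruent ::
  "nat \<Rightarrow> nat \<Rightarrow> nat \<Rightarrow> (nat \<Rightarrow> nat \<Rightarrow> nat \<Rightarrow> int) \<Rightarrow> (nat \<Rightarrow> nat \<Rightarrow> nat \<Rightarrow> int) \<Rightarrow> bool" where
  "weakly_congruent p n m A A' \<longleftrightarrow>
     (\<exists>P Q. invertible_mod p m P \<and> invertible_mod p n Q \<and>
        (\<forall>j<n. \<forall>a<m. \<forall>b<m.
           [A' j a b = (\<Sum>i<n. Q i j * (\<Sum>c<m. \<Sum>d<m. P a c * A i c d * P b d))] (mod int p)))"

text \<open>The group G(A): elements x + sum v_i h_i with x in M^(n), 0 <= v_i < p.  Multiplication uses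
  the cocycle beta(v,w) = sum_k (sum_{i<j} v_i w_j t^(k)_ij) a_k with a_k = 1/p in coordinate k,
  which realises the presentation: h_i central over M, p h_i = 0, [h_i,h_j] = sum_k t^(k)_ij a_k.\<close>
definition cocycle :: "nat \<Rightarrow> (nat \<Rightarrow> nat \<Rightarrow> nat \<Rightarrow> int) \<Rightarrow> nat \<Rightarrow> (nat \<Rightarrow> int) \<Rightarrow> (nat \<Rightarrow> int) \<Rightarrow> int" where
  "cocycle m A k v w = (\<Sum>j<m. \<Sum>i<j. v i * w j * A k i j)"

definition chernikov_group ::
  "nat \<Rightarrow> nat \<Rightarrow> nat \<Rightarrow> (nat \<Rightarrow> nat \<Rightarrow> nat \<Rightarrow> int) \<Rightarrow> ((nat \<Rightarrow> rat) \<times> (nat \<Rightarrow> int)) monoid" where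
  "chernikov_group p n m A =
     \<lparr> carrier = {(x, v). (\<forall>k<n. x k \<in> prufer_carrier p) \<and> (\<forall>k\<ge>n. x k = 0) \<and>
                          (\<forall>i<m. 0 \<le> v i \<and> v i < int p) \<and> (\<forall>i\<ge>m. v i = 0)},
       monoid.mult = (\<lambda>(x, v) (y, w).
                 ((\<lambda>k. if k < n then frac (x k + y k + of_int (cocycle m A k v w) / of_nat p) else 0),
                  (\<lambda>i. if i < m then (v i + w i) mod int p else 0))),
       one = ((\<lambda>_. 0), (\<lambda>_. 0)) \<rparr>"

end

theory Submission
  imports Defs
begin


definition VV :: "nat \<Rightarrow> nat \<Rightarrow> (nat \<Rightarrow> int) set" where
  "VV p d = {v. (\<forall>i<d. 0 \<le> v i \<and> v i < int p) \<and> (\<forall>i\<ge>d. v i = 0)}"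

definition XX :: "nat \<Rightarrow> nat \<Rightarrow> (nat \<Rightarrow> rat) set" where
  "XX p n = {x. (\<forall>k<n. x k \<in> prufer_carrier p) \<and> (\<forall>k\<ge>n. x k = 0)}"

definition vadd :: "nat \<Rightarrow> nat \<Rightarrow> (nat \<Rightarrow> int) \<Rightarrow> (nat \<Rightarrow> int) \<Rightarrow> (nat \<Rightarrow> int)" where
  "vadd p d v w = (\<lambda>i. if i < d then (v i + w i) mod int p else 0)"

definition pdy :: "nat \<Rightarrow> rat \<Rightarrow> bool" where
  "pdy p q \<longleftrightarrow> (\<exists>e::nat. q * of_nat (p ^ e) \<in> \<int>)"

lemma prufer_iff: "q \<in> prufer_carrier p \<longleftrightarrow> 0 \<le> q \<and> q < 1 \<and> pdy p q"
  by (simp add: prufer_carrier_def pdy_def)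

lemma carrier_G: "carrier (chernikov_group p n m A) = XX p n \<times> VV p m"
  by (auto simp: chernikov_group_def XX_def VV_def)

lemma mult_G: "(x, v) \<otimes>\<^bsub>chernikov_group p n m A\<^esub> (y, w) =
   ((\<lambda>k. if k < n then frac (x k + y k + of_int (cocycle m A k v w) / of_nat p) else 0), vadd p m v w)"
  by (simp add: chernikov_group_def vadd_def)

lemma frac_eq_iff_Ints: "frac (a::rat) = frac b \<longleftrightarrow> a - b \<in> \<int>"
proof
  assume "frac a = frac b"
  then have "a - b = of_int (\<lfloor>a\<rfloor> - \<lfloor>b\<rfloor>)" by (simp add: frac_def algebra_simps)
  then show "a - b \<in> \<int>" by simp
next
  assume "a - b \<in> \<int>"
  then have "frac (b + (a - b)) = frac b" by (rule frac_add_int_right)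
  then show "frac a = frac b" by simp
qed

lemma pdy_int: "q \<in> \<int> \<Longrightarrow> pdy p q"
  unfolding pdy_def by (rule exI[of _ 0]) simp

lemma pdy_add: assumes "pdy p a" "pdy p b" shows "pdy p (a + b)"
proof -
  from assms obtain e1 e2 where e: "a * of_nat (p^e1) \<in> \<int>" "b * of_nat (p^e2) \<in> \<int>"
    unfolding pdy_def by blast
  have "(a + b) * of_nat (p^(e1+e2)) = (a * of_nat (p^e1)) * of_nat (p^e2) + (b * of_nat (p^e2)) * of_nat (p^e1)"
    by (simp add: power_add algebra_simps)
  also have "\<dots> \<in> \<int>" using e by (meson Ints_add Ints_mult Ints_of_nat)
  finally show ?thesis unfolding pdy_def by blast
qed

lemma pdy_mult_int: assumes "pdy p a" "c \<in> \<int>" shows "pdy p (c * a)"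
proof -
  from assms obtain e where e: "a * of_nat (p^e) \<in> \<int>" unfolding pdy_def by blast
  have "(c * a) * of_nat (p^e) = c * (a * of_nat (p^e))" by simp
  also have "\<dots> \<in> \<int>" using e assms(2) by (meson Ints_mult)
  finally show ?thesis unfolding pdy_def by blast
qed

lemma pdy_neg: "pdy p a \<Longrightarrow> pdy p (- a)"
  using pdy_mult_int[of p a "-1"] by simp

lemma pdy_diff: "pdy p a \<Longrightarrow> pdy p b \<Longrightarrow> pdy p (a - b)"
  using pdy_add[of p a "-b"] pdy_neg[of p b] by simp

lemma pdy_div: assumes "pdy p a" shows "pdy p (a / of_nat p)"
proof (cases "p = 0")
  case True then show ?thesis by (simp add: pdy_int)
next
  case False
  from assms obtain e where e: "a * of_nat (p^e) \<in> \<int>" unfolding pdy_def by blast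
  have "(a / of_nat p) * of_nat (p^(Suc e)) = a * of_nat (p^e)" using False by simp
  then show ?thesis using e unfolding pdy_def by metis
qed

lemma pdy_frac: "pdy p a \<Longrightarrow> pdy p (frac a)"
  unfolding frac_def by (rule pdy_diff) (auto intro: pdy_int)

lemma pdy_sum: "(\<And>i. i \<in> S \<Longrightarrow> pdy p (f i)) \<Longrightarrow> pdy p (\<Sum>i\<in>S. f i)"
proof (induction S rule: infinite_finite_induct)
  case (infinite A) then show ?case by (simp add: pdy_int)
next
  case empty then show ?case by (simp add: pdy_int)
next
  case (insert x F) then show ?case by (simp add: pdy_add)
qed

lemma pdy_of_int_div: "pdy p (of_int a / of_nat p)"
  by (rule pdy_div, rule pdy_int) simp

lemma prufer_frac: "pdy p a \<Longrightarrow> frac a \<in> prufer_carrier p"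
  by (simp add: prufer_iff pdy_frac frac_lt_1)

lemma prufer_pdy: "q \<in> prufer_carrier p \<Longrightarrow> pdy p q"
  by (simp add: prufer_iff)

lemma prufer_frac_id: "q \<in> prufer_carrier p \<Longrightarrow> frac q = q"
  by (simp add: prufer_iff frac_eq)

lemma mult_closed_G:
  assumes "g \<in> carrier (chernikov_group p n m A)" "h \<in> carrier (chernikov_group p n m A)" "p > 0"
  shows "g \<otimes>\<^bsub>chernikov_group p n m A\<^esub> h \<in> carrier (chernikov_group p n m A)"
proof -
  obtain x v where g: "g = (x, v)" by (cases g)
  obtain y w where h: "h = (y, w)" by (cases h)
  have "int p > 0" using assms by simp
  show ?thesis using assms \<open>int p > 0\<close> unfolding g h mult_G carrier_G XX_def VV_def vadd_def
    apply (simp)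
    apply (intro allI impI conjI prufer_frac pdy_add pdy_of_int_div prufer_pdy; simp)
    done
qed

lemma VV_vadd: assumes "p > 0" shows "vadd p d v w \<in> VV p d"
proof -
  have "int p > 0" using assms by simp
  then show ?thesis by (auto simp: VV_def vadd_def)
qed

lemma vadd_zero_left: "v \<in> VV p d \<Longrightarrow> vadd p d (\<lambda>_. 0) v = v"
  by (auto simp: VV_def vadd_def fun_eq_iff)

lemma vadd_zero_right: "v \<in> VV p d \<Longrightarrow> vadd p d v (\<lambda>_. 0) = v"
  by (auto simp: VV_def vadd_def fun_eq_iff)

lemma vadd_comm: "vadd p d v w = vadd p d w v"
  by (simp add: vadd_def add.commute fun_eq_iff)

lemma zero_VV: "p > 0 \<Longrightarrow> (\<lambda>_. 0) \<in> VV p d" "(\<lambda>_. 0) \<in> XX p n"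
  by (auto simp: VV_def XX_def prufer_iff pdy_int)

lemma cocycle_zero[simp]: "cocycle m A k (\<lambda>_. 0) w = 0" "cocycle m A k v (\<lambda>_. 0) = 0"
  by (simp_all add: cocycle_def)

lemma XX_frac: "x \<in> XX p n \<Longrightarrow> k < n \<Longrightarrow> frac (x k) = x k"
  unfolding XX_def using prufer_frac_id by blast

lemma XX_range: "x \<in> XX p n \<Longrightarrow> k < n \<Longrightarrow> 0 \<le> x k \<and> x k < 1"
  by (simp add: XX_def prufer_iff)

lemma decomp_G:
  assumes "x \<in> XX p n" "v \<in> VV p m"
  shows "(x, v) = (x, \<lambda>_. 0) \<otimes>\<^bsub>chernikov_group p n m A\<^esub> ((\<lambda>_. 0), v)"
  using assms unfolding mult_G
  by (auto simp: vadd_zero_left fun_eq_iff XX_frac) (auto simp: XX_def)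

lemma Mmult_G:
  assumes "a \<in> XX p n" "w \<in> VV p m"
  shows "(a, \<lambda>_. 0) \<otimes>\<^bsub>chernikov_group p n m A\<^esub> (y, w) =
     ((\<lambda>k. if k < n then frac (a k + y k) else 0), w)"
  using assms unfolding mult_G by (simp add: vadd_zero_left fun_eq_iff)

lemma frac_frac_add: "frac (frac (a::rat) + b) = frac (a + b)"
  unfolding frac_eq_iff_Ints by (simp add: frac_def)

primrec pw :: "('a, 'b) monoid_scheme \<Rightarrow> 'a \<Rightarrow> nat \<Rightarrow> 'a" where
  "pw G g 0 = g"
| "pw G g (Suc k) = pw G g k \<otimes>\<^bsub>G\<^esub> g"

lemma pw_closed_G:
  assumes "p > 0" "g \<in> carrier (chernikov_group p n m A)"
  shows "pw (chernikov_group p n m A) g k \<in> carrier (chernikov_group p n m A)"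
  by (induction k) (simp_all add: assms mult_closed_G)

lemma pw_snd_G:
  assumes "p > 0" "(x, v) \<in> carrier (chernikov_group p n m A)"
  shows "snd (pw (chernikov_group p n m A) (x, v) k) = (\<lambda>i. if i < m then (int (Suc k) * v i) mod int p else 0)"
proof (induction k)
  case 0
  have "v \<in> VV p m" using assms carrier_G by auto
  then show ?case by (auto simp: VV_def fun_eq_iff)
next
  case (Suc k)
  obtain a b where ab: "pw (chernikov_group p n m A) (x, v) k = (a, b)" by (cases "pw (chernikov_group p n m A) (x, v) k")
  with Suc have b: "b = (\<lambda>i. if i < m then (int (Suc k) * v i) mod int p else 0)" by simp
  have e: "(((1 + int k) * v i) mod int p + v i) mod int p = ((2 + int k) * v i) mod int p" for i
  proof -
    have "(((1 + int k) * v i) mod int p + v i) mod int p = ((1 + int k) * v i + v i) mod int p"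
      by (rule mod_add_left_eq)
    also have "(1 + int k) * v i + v i = (2 + int k) * v i" by (simp add: algebra_simps)
    finally show ?thesis .
  qed
  show ?case
    by (simp only: ab pw.simps mult_G vadd_def b) (simp add: fun_eq_iff e)
qed

lemma pw_M_G:
  assumes "p > 0" "y \<in> XX p n"
  shows "pw (chernikov_group p n m A) (y, \<lambda>_. 0) k =
     ((\<lambda>j. if j < n then frac (of_nat (Suc k) * y j) else 0), \<lambda>_. 0)"
proof (induction k)
  case 0
  then show ?case using assms by (auto simp: fun_eq_iff XX_frac) (auto simp: XX_def)
next
  case (Suc k)
  show ?case using assms
    by (simp add: Suc mult_G vadd_def fun_eq_iff frac_frac_add algebra_simps)
qed

lemma hom_pw:
  assumes "\<And>a b. a \<in> carrier G \<Longrightarrow> b \<in> carrier G \<Longrightarrow> a \<otimes>\<^bsub>G\<^esub> b \<in> carrier G"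
    and "\<phi> \<in> hom G H" "g \<in> carrier G"
  shows "pw G g k \<in> carrier G \<and> \<phi> (pw G g k) = pw H (\<phi> g) k"
proof (induction k)
  case 0 then show ?case using assms by simp
next
  case (Suc k)
  then show ?case using assms hom_mult[OF assms(2)] by simp
qed

lemma iso_inv_gen:
  assumes clo: "\<And>a b. a \<in> carrier G \<Longrightarrow> b \<in> carrier G \<Longrightarrow> a \<otimes>\<^bsub>G\<^esub> b \<in> carrier G"
    and "h \<in> iso G H"
  shows "inv_into (carrier G) h \<in> iso H G"
proof -
  have h: "h \<in> hom G H" "bij_betw h (carrier G) (carrier H)"
    using assms by (auto simp add: iso_def)
  then have HG: "bij_betw (inv_into (carrier G) h) (carrier H) (carrier G)"
    by (simp add: bij_betw_inv_into)
  have "inv_into (carrier G) h \<in> hom H G"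
    unfolding hom_def
  proof safe
    show *: "\<And>x. x \<in> carrier H \<Longrightarrow> inv_into (carrier G) h x \<in> carrier G"
      by (meson HG bij_betwE)
    show "inv_into (carrier G) h (x \<otimes>\<^bsub>H\<^esub> y) = inv_into (carrier G) h x \<otimes>\<^bsub>G\<^esub> inv_into (carrier G) h y"
      if "x \<in> carrier H" "y \<in> carrier H" for x y
    proof (rule inv_into_f_eq)
      show "inj_on h (carrier G)"
        using bij_betw_def h(2) by blast
      show "inv_into (carrier G) h x \<otimes>\<^bsub>G\<^esub> inv_into (carrier G) h y \<in> carrier G"
        by (simp add: * clo that)
      show "h (inv_into (carrier G) h x \<otimes>\<^bsub>G\<^esub> inv_into (carrier G) h y) = x \<otimes>\<^bsub>H\<^esub> y"
        using h bij_betw_inv_into_right [of h] unfolding hom_def by (simp add: "*" that)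
    qed
  qed
  then show ?thesis
    by (simp add: Group.iso_def bij_betw_inv_into h)
qed

lemma M_pres:
  assumes "p > 0" "\<phi> \<in> hom (chernikov_group p n m A) (chernikov_group p n m B)" "x \<in> XX p n"
  shows "snd (\<phi> (x, \<lambda>_. 0)) = (\<lambda>_. 0)"
proof -
  let ?G = "chernikov_group p n m A" and ?H = "chernikov_group p n m B"
  define y where "y = (\<lambda>j. if j < n then x j / of_nat p else 0)"
  have p1: "(1::rat) \<le> of_nat p" using assms(1) by simp
  have y: "y \<in> XX p n"
  proof -
    have "0 \<le> x j / of_nat p \<and> x j / of_nat p < 1 \<and> pdy p (x j / of_nat p)" if "j < n" for j
    proof -
      have r: "0 \<le> x j" "x j < 1" using XX_range[OF assms(3) that] by auto
      have "x j / of_nat p \<le> x j" using r p1 by (simp add: divide_le_eq mult_le_cancel_left1 order_trans)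
      moreover have "pdy p (x j)" using assms(3) that by (simp add: XX_def prufer_pdy)
      ultimately show ?thesis using r by (auto intro: pdy_div)
    qed
    then show ?thesis by (auto simp: XX_def y_def prufer_iff)
  qed
  have yc: "(y, \<lambda>_. 0) \<in> carrier ?G" using y assms(1) by (simp add: carrier_G zero_VV)
  have "pw ?G (y, \<lambda>_. 0) (p - 1) = (x, \<lambda>_. 0)"
    using assms(1,3) y by (auto simp: pw_M_G y_def fun_eq_iff XX_frac) (auto simp: XX_def)
  moreover have "\<phi> (pw ?G (y, \<lambda>_. 0) (p - 1)) = pw ?H (\<phi> (y, \<lambda>_. 0)) (p - 1)"
    using hom_pw[OF _ assms(2) yc] mult_closed_G assms(1) by blast
  moreover have "\<phi> (y, \<lambda>_. 0) \<in> carrier ?H" using assms(2) yc by (auto simp: hom_def)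
  ultimately show ?thesis using pw_snd_G[OF assms(1), of "fst (\<phi> (y, \<lambda>_. 0))" "snd (\<phi> (y, \<lambda>_. 0))" n m B "p - 1"]
    assms(1) by (simp add: fun_eq_iff)
qed



section \<open>Linear algebra over F_p via additive bijections\<close>

definition ev :: "nat \<Rightarrow> nat \<Rightarrow> int" where
  "ev c = (\<lambda>i. if i = c then 1 else 0)"

definition smul :: "nat \<Rightarrow> nat \<Rightarrow> nat \<Rightarrow> (nat \<Rightarrow> int) \<Rightarrow> (nat \<Rightarrow> int)" where
  "smul p d k v = (\<lambda>i. if i < d then (int k * v i) mod int p else 0)"

definition trunc :: "nat \<Rightarrow> (nat \<Rightarrow> int) \<Rightarrow> (nat \<Rightarrow> int)" where
  "trunc t v = (\<lambda>i. if i < t then v i else 0)"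

definition additive :: "nat \<Rightarrow> nat \<Rightarrow> ((nat \<Rightarrow> int) \<Rightarrow> (nat \<Rightarrow> int)) \<Rightarrow> bool" where
  "additive p d f \<longleftrightarrow> (\<forall>v\<in>VV p d. f v \<in> VV p d) \<and>
     (\<forall>v\<in>VV p d. \<forall>w\<in>VV p d. f (vadd p d v w) = vadd p d (f v) (f w))"

lemma ev_VV: "p > 1 \<Longrightarrow> c < d \<Longrightarrow> ev c \<in> VV p d"
  by (auto simp: ev_def VV_def)

lemma smul_VV: "p > 0 \<Longrightarrow> smul p d k v \<in> VV p d"
  by (auto simp: smul_def VV_def)

lemma trunc_VV: "v \<in> VV p d \<Longrightarrow> trunc t v \<in> VV p d"
  by (auto simp: trunc_def VV_def)

lemma additive_zero:
  assumes "p > 0" "additive p d f"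
  shows "f (\<lambda>_. 0) = (\<lambda>_. 0)"
proof -
  have z: "(\<lambda>_. 0) \<in> VV p d" using assms by (simp add: zero_VV)
  have "vadd p d (\<lambda>_. 0) (\<lambda>_. 0) = (\<lambda>_. 0)" using vadd_zero_left[OF z] .
  then have e: "f (\<lambda>_. 0) = vadd p d (f (\<lambda>_. 0)) (f (\<lambda>_. 0))" using assms z unfolding additive_def by metis
  have f0: "f (\<lambda>_. 0) \<in> VV p d" using assms z unfolding additive_def by blast
  show ?thesis
  proof
    fix i
    show "f (\<lambda>_. 0) i = 0"
    proof (cases "i < d")
      case True
      let ?a = "f (\<lambda>_. 0) i"
      have r: "0 \<le> ?a" "?a < int p" using f0 True by (auto simp: VV_def)
      have "(?a + ?a) mod int p = ?a" using e True by (metis vadd_def)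
      then have "[?a + ?a = ?a] (mod int p)" using r by (simp add: cong_def)
      then have "[?a = 0] (mod int p)" using cong_add_rcancel_0 by blast
      then show ?thesis using r cong_less_imp_eq_int[of ?a "int p" 0] assms by simp
    next
      case False then show ?thesis using f0 by (simp add: VV_def)
    qed
  qed
qed

lemma additive_smul:
  assumes "p > 0" "additive p d f" "v \<in> VV p d"
  shows "f (smul p d k v) = smul p d k (f v)"
proof (induction k)
  case 0
  have "smul p d 0 v = (\<lambda>_. 0)" "smul p d 0 (f v) = (\<lambda>_. 0)" by (auto simp: smul_def)
  then show ?case using additive_zero[OF assms(1,2)] by simp
next
  case (Suc k)
  have s: "smul p d (Suc k) u = vadd p d (smul p d k u) u" for u
    by (auto simp: smul_def vadd_def fun_eq_iff mod_add_left_eq mod_add_right_eq algebra_simps)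
  have fv: "f v \<in> VV p d" using assms unfolding additive_def by blast
  have "f (smul p d (Suc k) v) = vadd p d (f (smul p d k v)) (f v)"
    using assms smul_VV[OF assms(1)] unfolding s additive_def by blast
  then show ?case using Suc s by simp
qed

lemma additive_trunc:
  assumes "p > 1" "additive p d f" "v \<in> VV p d"
  shows "t \<le> d \<Longrightarrow> a < d \<Longrightarrow> [f (trunc t v) a = (\<Sum>c<t. v c * f (ev c) a)] (mod int p)"
proof (induction t)
  case 0
  have "trunc 0 v = (\<lambda>_. 0)" by (simp add: trunc_def)
  then show ?case using additive_zero[of p d f] assms by simp
next
  case (Suc t)
  have p0: "p > 0" using assms by simp
  have vt: "0 \<le> v t" "v t < int p" using assms Suc.prems by (auto simp: VV_def)
  have tr: "trunc (Suc t) v = vadd p d (trunc t v) (smul p d (nat (v t)) (ev t))"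
    using Suc.prems assms(3) vt by (auto simp: trunc_def vadd_def smul_def ev_def fun_eq_iff VV_def less_Suc_eq)
  have evt: "ev t \<in> VV p d" using ev_VV assms Suc.prems by simp
  have "f (trunc (Suc t) v) = vadd p d (f (trunc t v)) (f (smul p d (nat (v t)) (ev t)))"
    unfolding tr using assms trunc_VV smul_VV[OF p0] unfolding additive_def by blast
  also have "\<dots> = vadd p d (f (trunc t v)) (smul p d (nat (v t)) (f (ev t)))"
    using additive_smul[OF p0 assms(2) evt] by simp
  finally have "f (trunc (Suc t) v) a = (f (trunc t v) a + (v t * f (ev t) a) mod int p) mod int p"
    using Suc.prems vt by (simp add: vadd_def smul_def)
  then have "[f (trunc (Suc t) v) a = f (trunc t v) a + v t * f (ev t) a] (mod int p)"
    by (simp add: cong_def mod_add_right_eq)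
  moreover have "[f (trunc t v) a + v t * f (ev t) a = (\<Sum>c<t. v c * f (ev c) a) + v t * f (ev t) a] (mod int p)"
    using Suc by (intro cong_add) auto
  ultimately show ?case by (simp add: cong_trans)
qed

lemma additive_formula:
  assumes "p > 1" "additive p d f" "v \<in> VV p d" "a < d"
  shows "[f v a = (\<Sum>c<d. v c * f (ev c) a)] (mod int p)"
proof -
  have "trunc d v = v" using assms(3) by (auto simp: trunc_def VV_def fun_eq_iff)
  then show ?thesis using additive_trunc[OF assms(1-3) _ assms(4), of d] by simp
qed

lemma additive_inv:
  assumes "p > 0" "additive p d f" "bij_betw f (VV p d) (VV p d)"
  shows "additive p d (inv_into (VV p d) f)" "bij_betw (inv_into (VV p d) f) (VV p d) (VV p d)"
proof -
  let ?g = "inv_into (VV p d) f"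
  show b: "bij_betw ?g (VV p d) (VV p d)" using assms(3) by (rule bij_betw_inv_into)
  have gV: "?g v \<in> VV p d" if "v \<in> VV p d" for v using b that bij_betwE by blast
  have fg: "f (?g v) = v" if "v \<in> VV p d" for v using assms(3) that by (simp add: bij_betw_inv_into_right)
  have inj: "inj_on f (VV p d)" using assms(3) by (simp add: bij_betw_def)
  have "?g (vadd p d v w) = vadd p d (?g v) (?g w)" if "v \<in> VV p d" "w \<in> VV p d" for v w
  proof (rule inv_into_f_eq[OF inj])
    show "vadd p d (?g v) (?g w) \<in> VV p d" using VV_vadd assms(1) by blast
    show "f (vadd p d (?g v) (?g w)) = vadd p d v w"
      using assms(2) gV fg that unfolding additive_def by simp
  qed
  then show "additive p d ?g" unfolding additive_def using gV by blast
qed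

lemma additive_invertible:
  assumes "p > 1" "additive p d f" "bij_betw f (VV p d) (VV p d)"
  shows "invertible_mod p d (\<lambda>c a. f (ev c) a)"
proof -
  have p0: "p > 0" using assms by simp
  let ?g = "inv_into (VV p d) f"
  have ga: "additive p d ?g" and gb: "bij_betw ?g (VV p d) (VV p d)"
    using additive_inv[OF p0 assms(2,3)] by auto
  have fg: "f (?g v) = v" if "v \<in> VV p d" for v using assms(3) that by (simp add: bij_betw_inv_into_right)
  have gf: "?g (f v) = v" if "v \<in> VV p d" for v
    using assms(3) that by (simp add: bij_betw_def inv_into_f_f)
  have fV: "f v \<in> VV p d" if "v \<in> VV p d" for v using assms(2) that unfolding additive_def by blast
  have gV: "?g v \<in> VV p d" if "v \<in> VV p d" for v using ga that unfolding additive_def by blast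
  show ?thesis unfolding invertible_mod_def
  proof (intro exI[of _ "\<lambda>a b. ?g (ev a) b"] allI impI conjI)
    fix i j assume ij: "i < d" "j < d"
    have "[?g (f (ev i)) j = (\<Sum>l<d. f (ev i) l * ?g (ev l) j)] (mod int p)"
      using additive_formula[OF assms(1) ga fV[OF ev_VV[OF assms(1) ij(1)]] ij(2)] .
    moreover have "?g (f (ev i)) j = (if i = j then 1 else 0)"
      using gf[OF ev_VV[OF assms(1) ij(1)]] by (simp add: ev_def)
    ultimately show "[(\<Sum>l<d. f (ev i) l * ?g (ev l) j) = (if i = j then 1 else 0)] (mod int p)"
      by (simp add: cong_sym)
    have "[f (?g (ev i)) j = (\<Sum>l<d. ?g (ev i) l * f (ev l) j)] (mod int p)"
      using additive_formula[OF assms(1) assms(2) gV[OF ev_VV[OF assms(1) ij(1)]] ij(2)] .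
    moreover have "f (?g (ev i)) j = (if i = j then 1 else 0)"
      using fg[OF ev_VV[OF assms(1) ij(1)]] by (simp add: ev_def)
    ultimately show "[(\<Sum>l<d. ?g (ev i) l * f (ev l) j) = (if i = j then 1 else 0)] (mod int p)"
      by (simp add: cong_sym)
  qed
qed



definition coc :: "nat \<Rightarrow> (nat \<Rightarrow> nat \<Rightarrow> int) \<Rightarrow> (nat \<Rightarrow> int) \<Rightarrow> (nat \<Rightarrow> int) \<Rightarrow> int" where
  "coc m T v w = (\<Sum>j<m. \<Sum>i<j. v i * w j * T i j)"

lemma cocycle_coc: "cocycle m A k v w = coc m (A k) v w"
  by (simp add: cocycle_def coc_def)

lemma if_mult_delta: "(if a = i then (1::int) else 0) * X = (if a = i then X else 0)"
  "X * (if a = i then (1::int) else 0) = (if a = i then X else 0)"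
  by simp_all

lemma sum_ev_right: "i < m \<Longrightarrow> (\<Sum>b<m. f b * ev i b) = f i"
  by (simp add: ev_def if_mult_delta sum.delta)

lemma sum_ev_left: "i < m \<Longrightarrow> (\<Sum>b<m. ev i b * f b) = f i"
  by (simp add: ev_def if_mult_delta sum.delta)

lemma skew_diag:
  assumes "skew_symmetric_mod p m T" "i < m"
  shows "[T i i = 0] (mod int p)"
proof -
  have "[(\<Sum>a<m. \<Sum>b<m. ev i a * T a b * ev i b) = 0] (mod int p)"
    using assms(1) unfolding skew_symmetric_mod_def by blast
  moreover have "(\<Sum>a<m. \<Sum>b<m. ev i a * T a b * ev i b) = T i i"
    using assms(2) by (simp add: ev_def if_mult_delta sum.delta)
  ultimately show ?thesis by simp
qed

lemma skew_anti:
  assumes "skew_symmetric_mod p m T" "i < m" "j < m"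
  shows "[T i j + T j i = 0] (mod int p)"
proof (cases "i = j")
  case True
  then show ?thesis using skew_diag[OF assms(1,2)] cong_add[of "T i i" 0 "int p" "T i i" 0] by simp
next
  case False
  let ?x = "\<lambda>a. ev i a + ev j a"
  have "[(\<Sum>a<m. \<Sum>b<m. ?x a * T a b * ?x b) = 0] (mod int p)"
    using spec[OF assms(1)[unfolded skew_symmetric_mod_def], of ?x] by simp
  moreover have "(\<Sum>a<m. \<Sum>b<m. ?x a * T a b * ?x b) = T i i + T i j + T j i + T j j"
    using assms(2,3) by (simp only: distrib_left distrib_right sum.distrib sum_ev_left sum_ev_right)
  ultimately have "[T i i + T i j + T j i + T j j = 0] (mod int p)" by simp
  moreover have "[T i i + T j j = 0] (mod int p)"
    using skew_diag[OF assms(1,2)] skew_diag[OF assms(1,3)] cong_add by fastforce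
  ultimately have "[(T i i + T i j + T j i + T j j) - (T i i + T j j) = 0 - 0] (mod int p)"
    using cong_diff by blast
  then show ?thesis by (simp add: algebra_simps)
qed

lemma skew_coc_aux:
  assumes "skew_symmetric_mod p m T"
  shows "t \<le> m \<Longrightarrow> [coc t T v w - coc t T w v = (\<Sum>c<t. \<Sum>d<t. v c * T c d * w d)] (mod int p)"
proof (induction t)
  case 0 then show ?case by (simp add: coc_def)
next
  case (Suc t)
  have tm: "t < m" using Suc.prems by simp
  let ?S = "\<lambda>t. (\<Sum>c<t. \<Sum>d<t. v c * T c d * w d)"
  have S: "?S (Suc t) = ?S t + (\<Sum>d<t. v t * T t d * w d) + (\<Sum>c<t. v c * T c t * w t) + v t * T t t * w t"
    by (simp add: sum.distrib algebra_simps)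
  have C1: "coc (Suc t) T v w = coc t T v w + (\<Sum>i<t. v i * w t * T i t)" by (simp add: coc_def)
  have C2: "coc (Suc t) T w v = coc t T w v + (\<Sum>i<t. w i * v t * T i t)" by (simp add: coc_def)
  have e1: "(\<Sum>c<t. v c * T c t * w t) = (\<Sum>i<t. v i * w t * T i t)" by (simp add: algebra_simps)
  have e2: "[(\<Sum>d<t. v t * T t d * w d) = - (\<Sum>i<t. w i * v t * T i t)] (mod int p)"
  proof -
    have "[(\<Sum>d<t. v t * T t d * w d + w d * v t * T d t) = (\<Sum>d<t. 0)] (mod int p)"
    proof (rule cong_sum)
      fix d assume "d \<in> {..<t}"
      then have "[T t d + T d t = 0] (mod int p)" using skew_anti[OF assms tm] tm by simp
      then have "[v t * w d * (T t d + T d t) = v t * w d * 0] (mod int p)" by (rule cong_scalar_left)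
      then show "[v t * T t d * w d + w d * v t * T d t = 0] (mod int p)" by (simp add: algebra_simps)
    qed
    then have "[(\<Sum>d<t. v t * T t d * w d) + (\<Sum>i<t. w i * v t * T i t) = 0] (mod int p)"
      by (simp add: sum.distrib)
    then show ?thesis by (simp add: cong_iff_dvd_diff)
  qed
  have e3: "[v t * T t t * w t = 0] (mod int p)"
  proof -
    have "[v t * w t * T t t = v t * w t * 0] (mod int p)" using skew_diag[OF assms tm] by (rule cong_scalar_left)
    then show ?thesis by (simp add: algebra_simps)
  qed
  have IH: "[?S t = coc t T v w - coc t T w v] (mod int p)" using Suc.IH Suc.prems by (simp add: cong_sym)
  have X: "[?S t + (\<Sum>d<t. v t * T t d * w d) + (\<Sum>c<t. v c * T c t * w t) + v t * T t t * w t
       = (coc t T v w - coc t T w v) + (- (\<Sum>i<t. w i * v t * T i t)) + (\<Sum>i<t. v i * w t * T i t) + 0] (mod int p)"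
    using IH e2 e3 unfolding e1 by (intro cong_add) auto
  have L: "(coc t T v w - coc t T w v) + (- (\<Sum>i<t. w i * v t * T i t)) + (\<Sum>i<t. v i * w t * T i t) + 0
     = coc (Suc t) T v w - coc (Suc t) T w v" unfolding C1 C2 by (simp add: algebra_simps)
  show ?case using cong_sym[OF X] unfolding L S[symmetric] .
qed

lemma skew_coc:
  assumes "skew_symmetric_mod p m T"
  shows "[coc m T v w - coc m T w v = (\<Sum>c<m. \<Sum>d<m. v c * T c d * w d)] (mod int p)"
  using skew_coc_aux[OF assms, of m] by simp

lemma frac_div_mod: "p > 0 \<Longrightarrow> frac (of_int a / of_nat p :: rat) = of_int (a mod int p) / of_nat p"
proof -
  assume p: "p > 0"
  have "of_int a / of_nat p = (of_int (a div int p) :: rat) + of_int (a mod int p) / of_nat p"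
  proof -
    have "a = int p * (a div int p) + a mod int p" by simp
    then have "(of_int a :: rat) = of_nat p * of_int (a div int p) + of_int (a mod int p)"
      by (metis of_int_add of_int_mult of_int_of_nat_eq)
    then show ?thesis using p by (simp add: field_simps)
  qed
  moreover have "0 \<le> (of_int (a mod int p) :: rat) / of_nat p" using p by simp
  moreover have "(of_int (a mod int p) :: rat) / of_nat p < 1"
  proof -
    have "a mod int p < int p" using p by simp
    then have "(of_int (a mod int p) :: rat) < of_int (int p)" by (simp only: of_int_less_iff)
    then show ?thesis using p by (simp add: divide_less_eq)
  qed
  ultimately show ?thesis by (simp add: frac_add_of_int_left)
qed

lemma frac_add2: "frac (frac (a::rat) + frac b) = frac (a + b)"
  unfolding frac_eq_iff_Ints by (simp add: frac_def)

definition ue :: "nat \<Rightarrow> (nat \<Rightarrow> int) \<Rightarrow> nat \<Rightarrow> rat" where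
  "ue p u = (\<lambda>k. of_int (u k) / of_nat p)"

lemma ue_XX: "p > 0 \<Longrightarrow> u \<in> VV p n \<Longrightarrow> ue p u \<in> XX p n"
  by (auto simp: ue_def XX_def VV_def prufer_iff divide_less_eq intro: pdy_of_int_div)

lemma ue_inj: "p > 0 \<Longrightarrow> ue p u = ue p u' \<Longrightarrow> u = u'"
  by (auto simp: ue_def fun_eq_iff)

lemma Mp_char:
  assumes "p > 0" "x \<in> XX p n" "\<forall>j<n. of_nat p * x j \<in> \<int>"
  shows "\<exists>u\<in>VV p n. x = ue p u"
proof -
  define u where "u = (\<lambda>j. if j < n then \<lfloor>of_nat p * x j\<rfloor> else 0)"
  have "of_int (u j) = of_nat p * x j" if "j < n" for j
    using assms(3) that by (simp add: u_def)
  have "u \<in> VV p n"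
  proof -
    have "0 \<le> u j \<and> u j < int p" if "j < n" for j
    proof -
      have r: "0 \<le> x j" "x j < 1" using XX_range[OF assms(2) that] by auto
      have "(0::rat) \<le> of_nat p * x j" using r by simp
      moreover have "of_nat p * x j < (of_nat p :: rat)" using r assms(1) by simp
      ultimately show ?thesis
      proof -
        have "of_nat p * x j < of_int (int p)" using \<open>of_nat p * x j < of_nat p\<close> by simp
        then have "\<lfloor>of_nat p * x j\<rfloor> < int p" by (simp only: floor_less_iff)
        moreover have "0 \<le> \<lfloor>of_nat p * x j\<rfloor>" using \<open>0 \<le> of_nat p * x j\<close> by simp
        ultimately show ?thesis using that by (simp add: u_def)
      qed
    qed
    then show ?thesis by (auto simp: VV_def u_def)
  qed
  moreover have "x = ue p u"
  proof
    fix j show "x j = ue p u j"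
    proof (cases "j < n")
      case True
      then have "of_int (u j) = of_nat p * x j" using assms(3) by (simp add: u_def)
      then show ?thesis using assms(1) by (simp add: ue_def)
    next
      case False then show ?thesis using assms(2) by (simp add: XX_def ue_def u_def)
    qed
  qed
  ultimately show ?thesis by blast
qed

lemma pw_char:
  assumes "p > 0" "x \<in> XX p n"
  shows "pw (chernikov_group p n m A) (x, \<lambda>_. 0) p = (x, \<lambda>_. 0) \<longleftrightarrow> (\<forall>j<n. of_nat p * x j \<in> \<int>)"
proof -
  have "pw (chernikov_group p n m A) (x, \<lambda>_. 0) p = (x, \<lambda>_. 0) \<longleftrightarrow>
        (\<forall>j<n. frac (of_nat (Suc p) * x j) = x j)"
  proof -
    have e: "pw (chernikov_group p n m A) (x, \<lambda>_. 0) p = ((\<lambda>j. if j < n then frac (of_nat (Suc p) * x j) else 0), \<lambda>_. 0)"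
      by (rule pw_M_G[OF assms])
    have x0: "\<And>j. \<not> j < n \<Longrightarrow> x j = 0" using assms(2) by (simp add: XX_def)
    show ?thesis
    proof
      assume "pw (chernikov_group p n m A) (x, \<lambda>_. 0) p = (x, \<lambda>_. 0)"
      then have E: "(\<lambda>j. if j < n then frac (of_nat (Suc p) * x j) else 0) = x" unfolding e by simp
      show "\<forall>j<n. frac (of_nat (Suc p) * x j) = x j"
      proof (intro allI impI)
        fix j assume "j < n"
        with fun_cong[OF E, of j] show "frac (of_nat (Suc p) * x j) = x j" by simp
      qed
    next
      assume H: "\<forall>j<n. frac (of_nat (Suc p) * x j) = x j"
      have "(\<lambda>j. if j < n then frac (of_nat (Suc p) * x j) else 0) = x"
        using H x0 by (auto simp: fun_eq_iff)
      then show "pw (chernikov_group p n m A) (x, \<lambda>_. 0) p = (x, \<lambda>_. 0)" unfolding e by simp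
    qed
  qed
  also have "\<dots> \<longleftrightarrow> (\<forall>j<n. of_nat p * x j \<in> \<int>)"
  proof -
    have "frac (of_nat (Suc p) * x j) = x j \<longleftrightarrow> of_nat p * x j \<in> \<int>" if "j < n" for j
    proof -
      have "frac (of_nat (Suc p) * x j) = x j \<longleftrightarrow> frac (of_nat (Suc p) * x j) = frac (x j)"
        using XX_frac[OF assms(2) that] by simp
      also have "\<dots> \<longleftrightarrow> of_nat p * x j \<in> \<int>" by (simp add: frac_eq_iff_Ints algebra_simps)
      finally show ?thesis .
    qed
    then show ?thesis by auto
  qed
  finally show ?thesis .
qed

definition cm :: "nat \<Rightarrow> nat \<Rightarrow> nat \<Rightarrow> (nat \<Rightarrow> nat \<Rightarrow> nat \<Rightarrow> int) \<Rightarrow> (nat \<Rightarrow> int) \<Rightarrow> (nat \<Rightarrow> int) \<Rightarrow> nat \<Rightarrow> rat" where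
  "cm p n m A v w = (\<lambda>k. if k < n then frac (of_int (cocycle m A k v w - cocycle m A k w v) / of_nat p) else 0)"

definition bu :: "nat \<Rightarrow> nat \<Rightarrow> nat \<Rightarrow> (nat \<Rightarrow> nat \<Rightarrow> nat \<Rightarrow> int) \<Rightarrow> (nat \<Rightarrow> int) \<Rightarrow> (nat \<Rightarrow> int) \<Rightarrow> nat \<Rightarrow> int" where
  "bu p n m A v w = (\<lambda>k. if k < n then (cocycle m A k v w - cocycle m A k w v) mod int p else 0)"

lemma cm_bu: "p > 0 \<Longrightarrow> cm p n m A v w = ue p (bu p n m A v w)"
  by (auto simp: cm_def bu_def ue_def fun_eq_iff frac_div_mod simp del: of_int_diff)

lemma bu_VV: "p > 0 \<Longrightarrow> bu p n m A v w \<in> VV p n"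
  by (auto simp: bu_def VV_def)

lemma comm_G:
  assumes "p > 0" "(x, v) \<in> carrier (chernikov_group p n m A)" "(y, w) \<in> carrier (chernikov_group p n m A)"
  shows "(x, v) \<otimes>\<^bsub>chernikov_group p n m A\<^esub> (y, w) =
     (cm p n m A v w, \<lambda>_. 0) \<otimes>\<^bsub>chernikov_group p n m A\<^esub> ((y, w) \<otimes>\<^bsub>chernikov_group p n m A\<^esub> (x, v))"
proof -
  have V: "vadd p m w v \<in> VV p m" using VV_vadd assms(1) by blast
  show ?thesis
  proof (simp only: mult_G prod_eq_iff fst_conv snd_conv, intro conjI)
    show "vadd p m v w = vadd p m (\<lambda>_. 0) (vadd p m w v)" using vadd_zero_left[OF V] vadd_comm by metis
    show "(\<lambda>k. if k < n then frac (x k + y k + of_int (cocycle m A k v w) / of_nat p) else 0) =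
      (\<lambda>k. if k < n then frac (cm p n m A v w k + (if k < n then frac (y k + x k + of_int (cocycle m A k w v) / of_nat p) else 0) +
          of_int (cocycle m A k (\<lambda>_. 0) (vadd p m w v)) / of_nat p) else 0)"
    proof (rule ext)
      fix k
      show "(if k < n then frac (x k + y k + of_int (cocycle m A k v w) / of_nat p) else 0) =
        (if k < n then frac (cm p n m A v w k + (if k < n then frac (y k + x k + of_int (cocycle m A k w v) / of_nat p) else 0) +
          of_int (cocycle m A k (\<lambda>_. 0) (vadd p m w v)) / of_nat p) else 0)"
      proof (cases "k < n")
        case True
        have "frac (cm p n m A v w k + frac (y k + x k + of_int (cocycle m A k w v) / of_nat p)) =
              frac (of_int (cocycle m A k v w - cocycle m A k w v) / of_nat p + (y k + x k + of_int (cocycle m A k w v) / of_nat p))"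
          using True by (simp add: cm_def frac_add2)
        also have "\<dots> = frac (x k + y k + of_int (cocycle m A k v w) / of_nat p)"
          by (simp add: algebra_simps diff_divide_distrib)
        finally show ?thesis using True by simp
      qed simp
    qed
  qed
qed

lemma cancel_G:
  assumes "a \<in> XX p n" "a' \<in> XX p n" "w \<in> VV p m"
    and "(a, \<lambda>_. 0) \<otimes>\<^bsub>chernikov_group p n m A\<^esub> (y, w) = (a', \<lambda>_. 0) \<otimes>\<^bsub>chernikov_group p n m A\<^esub> (y, w)"
  shows "a = a'"
proof
  fix k
  show "a k = a' k"
  proof (cases "k < n")
    case True
    from assms(4) have "frac (a k + y k) = frac (a' k + y k)"
    proof -
      have "(\<lambda>k. if k < n then frac (a k + y k) else 0) = (\<lambda>k. if k < n then frac (a' k + y k) else 0)"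
        using assms(4) unfolding Mmult_G[OF assms(1,3)] Mmult_G[OF assms(2,3)] by simp
      from fun_cong[OF this, of k] True show ?thesis by simp
    qed
    then have "a k - a' k \<in> \<int>" by (simp add: frac_eq_iff_Ints)
    then have "frac (a k) = frac (a' k)" by (simp add: frac_eq_iff_Ints)
    then show ?thesis using XX_frac assms(1,2) True by metis
  next
    case False then show ?thesis using assms(1,2) by (simp add: XX_def)
  qed
qed



lemma ue_add:
  assumes "p > 0" "u \<in> VV p n" "u' \<in> VV p n"
  shows "(ue p u, \<lambda>_. 0) \<otimes>\<^bsub>chernikov_group p n m B\<^esub> (ue p u', \<lambda>_. 0) = (ue p (vadd p n u u'), \<lambda>_. 0)"
proof -
  have z: "vadd p m (\<lambda>_. 0) (\<lambda>_. 0) = (\<lambda>_. 0)" using vadd_zero_left[OF zero_VV(1)[OF assms(1)]] .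
  have f: "(\<lambda>k. if k < n then frac (ue p u k + ue p u' k + of_int (cocycle m B k (\<lambda>_. 0) (\<lambda>_. 0)) / of_nat p) else 0)
     = ue p (vadd p n u u')"
  proof
    fix k show "(if k < n then frac (ue p u k + ue p u' k + of_int (cocycle m B k (\<lambda>_. 0) (\<lambda>_. 0)) / of_nat p) else 0)
     = ue p (vadd p n u u') k"
    proof (cases "k < n")
      case True
      have "ue p u k + ue p u' k = of_int (u k + u' k) / of_nat p" by (simp add: ue_def add_divide_distrib)
      then show ?thesis using True frac_div_mod[OF assms(1), of "u k + u' k"] by (simp add: ue_def vadd_def)
    qed (simp add: ue_def vadd_def)
  qed
  show ?thesis unfolding mult_G f z ..
qed

lemma XX_fracI: "(\<And>k. k < n \<Longrightarrow> pdy p (f k)) \<Longrightarrow> (\<lambda>k. if k < n then frac (f k) else 0) \<in> XX p n"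
  unfolding XX_def using prufer_frac by auto

lemma XX_pdy: "x \<in> XX p n \<Longrightarrow> k < n \<Longrightarrow> pdy p (x k)"
  unfolding XX_def using prufer_pdy by auto

lemma forward:
  assumes pr: "prime p" and skA: "skew_tuple p n m A" and skA': "skew_tuple p n m A'"
    and iso: "\<phi> \<in> iso (chernikov_group p n m A) (chernikov_group p n m A')"
  shows "weakly_congruent p n m A A'"
proof -
  let ?G = "chernikov_group p n m A" and ?H = "chernikov_group p n m A'"
  have p1: "p > 1" using pr prime_gt_1_nat by blast
  then have p0: "p > 0" by simp
  have cloG: "\<And>a b. a \<in> carrier ?G \<Longrightarrow> b \<in> carrier ?G \<Longrightarrow> a \<otimes>\<^bsub>?G\<^esub> b \<in> carrier ?G"
    using mult_closed_G p0 by blast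
  have cloH: "\<And>a b. a \<in> carrier ?H \<Longrightarrow> b \<in> carrier ?H \<Longrightarrow> a \<otimes>\<^bsub>?H\<^esub> b \<in> carrier ?H"
    using mult_closed_G p0 by blast
  have hom: "\<phi> \<in> hom ?G ?H" and bij: "bij_betw \<phi> (carrier ?G) (carrier ?H)"
    using iso by (auto simp: iso_def)
  define \<psi> where "\<psi> = inv_into (carrier ?G) \<phi>"
  have psiso: "\<psi> \<in> iso ?H ?G" unfolding \<psi>_def by (rule iso_inv_gen[OF cloG iso])
  have phom: "\<psi> \<in> hom ?H ?G" using psiso by (simp add: iso_def)
  have phiC: "\<And>g. g \<in> carrier ?G \<Longrightarrow> \<phi> g \<in> carrier ?H" using hom by (auto simp: hom_def)
  have psiC: "\<And>g. g \<in> carrier ?H \<Longrightarrow> \<psi> g \<in> carrier ?G" using phom by (auto simp: hom_def)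
  have phipsi: "\<And>h. h \<in> carrier ?H \<Longrightarrow> \<phi> (\<psi> h) = h"
    unfolding \<psi>_def using bij by (simp add: bij_betw_inv_into_right)
  have psiphi: "\<And>g. g \<in> carrier ?G \<Longrightarrow> \<psi> (\<phi> g) = g"
    unfolding \<psi>_def using bij by (simp add: bij_betw_def inv_into_f_f)
  have phimult: "\<And>a b. a \<in> carrier ?G \<Longrightarrow> b \<in> carrier ?G \<Longrightarrow> \<phi> (a \<otimes>\<^bsub>?G\<^esub> b) = \<phi> a \<otimes>\<^bsub>?H\<^esub> \<phi> b"
    using hom by (simp add: hom_mult)
  have psimult: "\<And>a b. a \<in> carrier ?H \<Longrightarrow> b \<in> carrier ?H \<Longrightarrow> \<psi> (a \<otimes>\<^bsub>?H\<^esub> b) = \<psi> a \<otimes>\<^bsub>?G\<^esub> \<psi> b"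
    using phom by (simp add: hom_mult)
  have inj: "inj_on \<phi> (carrier ?G)" using bij by (simp add: bij_betw_def)

  have Mphi: "\<exists>a\<in>XX p n. \<phi> (x, \<lambda>_. 0) = (a, \<lambda>_. 0)" if x: "x \<in> XX p n" for x
  proof -
    have c: "(x, \<lambda>_. 0) \<in> carrier ?G" using x p0 by (simp add: carrier_G zero_VV)
    have "snd (\<phi> (x, \<lambda>_.0)) = (\<lambda>_. 0)" by (rule M_pres[OF p0 hom x])
    moreover have "fst (\<phi> (x, \<lambda>_.0)) \<in> XX p n" using phiC[OF c] by (auto simp: carrier_G)
    ultimately show ?thesis by (metis prod.collapse)
  qed
  have Mpsi: "\<exists>a\<in>XX p n. \<psi> (x, \<lambda>_. 0) = (a, \<lambda>_. 0)" if x: "x \<in> XX p n" for x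
  proof -
    have c: "(x, \<lambda>_. 0) \<in> carrier ?H" using x p0 by (simp add: carrier_G zero_VV)
    have "snd (\<psi> (x, \<lambda>_.0)) = (\<lambda>_. 0)" by (rule M_pres[OF p0 phom x])
    moreover have "fst (\<psi> (x, \<lambda>_.0)) \<in> XX p n" using psiC[OF c] by (auto simp: carrier_G)
    ultimately show ?thesis by (metis prod.collapse)
  qed

  define \<pi> where "\<pi> v = snd (\<phi> ((\<lambda>_. 0), v))" for v
  have topC: "((\<lambda>_. 0), v) \<in> carrier ?G" if "v \<in> VV p m" for v
    using that zero_VV by (simp add: carrier_G)
  have topCH: "((\<lambda>_. 0), v) \<in> carrier ?H" if "v \<in> VV p m" for v
    using that zero_VV by (simp add: carrier_G)
  have piV: "\<pi> v \<in> VV p m" if "v \<in> VV p m" for v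
    using phiC[OF topC[OF that]] by (auto simp: carrier_G \<pi>_def)
  have snd_phi: "snd (\<phi> (x, v)) = \<pi> v" if x: "x \<in> XX p n" and v: "v \<in> VV p m" for x v
  proof -
    obtain a where a: "a \<in> XX p n" "\<phi> (x, \<lambda>_. 0) = (a, \<lambda>_. 0)" using Mphi[OF x] by blast
    obtain s u where su: "\<phi> ((\<lambda>_. 0), v) = (s, u)" by (cases "\<phi> ((\<lambda>_. 0), v)")
    have uV: "u \<in> VV p m" using piV[OF v] su by (simp add: \<pi>_def)
    have "\<phi> (x, v) = \<phi> (x, \<lambda>_.0) \<otimes>\<^bsub>?H\<^esub> \<phi> ((\<lambda>_.0), v)"
      using decomp_G[OF x v, of A] phimult[of "(x, \<lambda>_.0)" "((\<lambda>_.0), v)"] topC[OF v] x p0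
      by (simp add: carrier_G zero_VV)
    also have "\<dots> = (a, \<lambda>_.0) \<otimes>\<^bsub>?H\<^esub> (s, u)" using a su by simp
    finally show ?thesis using Mmult_G[OF a(1) uV] su by (simp add: \<pi>_def)
  qed
  have piadd: "\<pi> (vadd p m v w) = vadd p m (\<pi> v) (\<pi> w)" if v: "v \<in> VV p m" and w: "w \<in> VV p m" for v w
  proof -
    define c where "c = (\<lambda>k. if k < n then frac (of_int (cocycle m A k v w) / of_nat p) else (0::rat))"
    have prod: "((\<lambda>_. 0), v) \<otimes>\<^bsub>?G\<^esub> ((\<lambda>_. 0), w) = (c, vadd p m v w)"
      unfolding mult_G c_def by (simp add: fun_eq_iff)
    have "(c, vadd p m v w) \<in> carrier ?G" using cloG[OF topC[OF v] topC[OF w]] prod by simp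
    then have cX: "c \<in> XX p n" by (simp add: carrier_G)
    obtain s u where su: "\<phi> ((\<lambda>_. 0), v) = (s, u)" by (cases "\<phi> ((\<lambda>_. 0), v)")
    obtain t u' where tu: "\<phi> ((\<lambda>_. 0), w) = (t, u')" by (cases "\<phi> ((\<lambda>_. 0), w)")
    have "\<pi> (vadd p m v w) = snd (\<phi> (c, vadd p m v w))" using snd_phi[OF cX VV_vadd[OF p0]] by simp
    also have "\<dots> = snd (\<phi> ((\<lambda>_. 0), v) \<otimes>\<^bsub>?H\<^esub> \<phi> ((\<lambda>_. 0), w))"
      using phimult[OF topC[OF v] topC[OF w]] prod by simp
    also have "\<dots> = vadd p m (\<pi> v) (\<pi> w)" using su tu by (simp add: mult_G \<pi>_def)
    finally show ?thesis .
  qed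
  have piinj: "inj_on \<pi> (VV p m)"
  proof (rule inj_onI)
    fix v w assume v: "v \<in> VV p m" and w: "w \<in> VV p m" and e: "\<pi> v = \<pi> w"
    obtain s u where su: "\<phi> ((\<lambda>_. 0), v) = (s, u)" by (cases "\<phi> ((\<lambda>_. 0), v)")
    obtain t u' where tu: "\<phi> ((\<lambda>_. 0), w) = (t, u')" by (cases "\<phi> ((\<lambda>_. 0), w)")
    have uu: "u' = u" using e su tu by (simp add: \<pi>_def)
    have sc: "(s, u) \<in> carrier ?H" using phiC[OF topC[OF v]] su by simp
    have tc: "(t, u) \<in> carrier ?H" using phiC[OF topC[OF w]] tu uu by simp
    have sX: "s \<in> XX p n" and uV: "u \<in> VV p m" using sc by (auto simp: carrier_G)
    have tX: "t \<in> XX p n" using tc by (auto simp: carrier_G)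
    define d where "d = (\<lambda>k. if k < n then frac (s k - t k) else 0)"
    have dX: "d \<in> XX p n"
      unfolding d_def using sX tX by (intro XX_fracI pdy_diff) (auto simp: XX_pdy)
    have dc: "(d, \<lambda>_. 0) \<in> carrier ?H" using dX p0 by (simp add: carrier_G zero_VV)
    have "(d, \<lambda>_. 0) \<otimes>\<^bsub>?H\<^esub> (t, u) = (s, u)"
    proof -
      have "(\<lambda>k. if k < n then frac (d k + t k) else 0) = s"
      proof
        fix k show "(if k < n then frac (d k + t k) else 0) = s k"
          using sX XX_frac[OF sX, of k] by (auto simp: d_def frac_frac_add XX_def)
      qed
      then show ?thesis using Mmult_G[OF dX uV] by simp
    qed
    obtain e where e: "e \<in> XX p n" "\<psi> (d, \<lambda>_. 0) = (e, \<lambda>_. 0)" using Mpsi[OF dX] by blast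
    have "((\<lambda>_. 0), v) = \<psi> (s, u)" using psiphi[OF topC[OF v]] su by simp
    also have "\<dots> = \<psi> ((d, \<lambda>_.0) \<otimes>\<^bsub>?H\<^esub> (t, u))" using \<open>(d, \<lambda>_. 0) \<otimes>\<^bsub>?H\<^esub> (t, u) = (s, u)\<close> by simp
    also have "\<dots> = \<psi> (d, \<lambda>_.0) \<otimes>\<^bsub>?G\<^esub> \<psi> (t, u)" using psimult[OF dc tc] .
    also have "\<psi> (t, u) = ((\<lambda>_. 0), w)" using psiphi[OF topC[OF w]] tu uu by simp
    finally show "v = w" using e Mmult_G[OF e(1) w] by simp
  qed
  have pisurj: "\<pi> ` VV p m = VV p m"
  proof
    show "\<pi> ` VV p m \<subseteq> VV p m" using piV by blast
    show "VV p m \<subseteq> \<pi> ` VV p m"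
    proof
      fix u assume u: "u \<in> VV p m"
      obtain x v where xv: "\<psi> ((\<lambda>_. 0), u) = (x, v)" by (cases "\<psi> ((\<lambda>_. 0), u)")
      have "(x, v) \<in> carrier ?G" using psiC[OF topCH[OF u]] xv by simp
      then have x: "x \<in> XX p n" and v: "v \<in> VV p m" by (auto simp: carrier_G)
      have "\<phi> (x, v) = ((\<lambda>_. 0), u)" using phipsi[OF topCH[OF u]] xv by simp
      then have "\<pi> v = u" using snd_phi[OF x v] by simp
      then show "u \<in> \<pi> ` VV p m" using v by blast
    qed
  qed
  have pibij: "bij_betw \<pi> (VV p m) (VV p m)" using piinj pisurj by (simp add: bij_betw_def)
  have piaddv: "additive p m \<pi>" using piV piadd by (simp add: additive_def)
  define \<rho> where "\<rho> = inv_into (VV p m) \<pi>"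
  have rhoadd: "additive p m \<rho>" and rhobij: "bij_betw \<rho> (VV p m) (VV p m)"
    using additive_inv[OF p0 piaddv pibij] by (auto simp: \<rho>_def)
  have Pinv: "invertible_mod p m (\<lambda>a c. \<rho> (ev a) c)"
    using additive_invertible[OF p1 rhoadd rhobij] .
  have rhoV: "\<rho> v \<in> VV p m" if "v \<in> VV p m" for v using rhoadd that by (simp add: additive_def)
  have pirho: "\<pi> (\<rho> v) = v" if "v \<in> VV p m" for v
    using pibij that by (simp add: \<rho>_def bij_betw_inv_into_right)

  have ueC: "(ue p u, \<lambda>_. 0) \<in> carrier (chernikov_group p n m B)" if "u \<in> VV p n" for u B
    using ue_XX[OF p0 that] zero_VV(1)[OF p0] by (simp add: carrier_G)
  have ue_pw: "pw (chernikov_group p n m B) (ue p u, \<lambda>_.0) p = (ue p u, \<lambda>_.0)" if u: "u \<in> VV p n" for u B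
  proof -
    have "\<forall>j<n. of_nat p * ue p u j \<in> \<int>" using p0 by (simp add: ue_def)
    then show ?thesis using pw_char[OF p0 ue_XX[OF p0 u]] by blast
  qed
  have bot: "\<forall>u\<in>VV p n. \<exists>u'. u' \<in> VV p n \<and> \<phi> (ue p u, \<lambda>_. 0) = (ue p u', \<lambda>_. 0)"
  proof
    fix u assume u: "u \<in> VV p n"
    obtain a where a: "a \<in> XX p n" "\<phi> (ue p u, \<lambda>_.0) = (a, \<lambda>_.0)" using Mphi[OF ue_XX[OF p0 u]] by blast
    have "pw ?H (a, \<lambda>_.0) p = (a, \<lambda>_.0)"
    proof -
      have "\<phi> (pw ?G (ue p u, \<lambda>_.0) p) = pw ?H (\<phi> (ue p u, \<lambda>_.0)) p"
        using hom_pw[OF cloG hom ueC[OF u]] by blast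
      then show ?thesis using ue_pw[OF u] a(2) by simp
    qed
    then have "\<forall>j<n. of_nat p * a j \<in> \<int>" using pw_char[OF p0 a(1)] by blast
    then obtain u' where "u' \<in> VV p n" "a = ue p u'" using Mp_char[OF p0 a(1)] by blast
    then show "\<exists>u'. u' \<in> VV p n \<and> \<phi> (ue p u, \<lambda>_. 0) = (ue p u', \<lambda>_. 0)" using a(2) by blast
  qed
  then obtain \<psi>0 where psi0: "\<forall>u\<in>VV p n. \<psi>0 u \<in> VV p n \<and> \<phi> (ue p u, \<lambda>_. 0) = (ue p (\<psi>0 u), \<lambda>_. 0)"
    using bchoice[of "VV p n" "\<lambda>u u'. u' \<in> VV p n \<and> \<phi> (ue p u, \<lambda>_. 0) = (ue p u', \<lambda>_. 0)"] by blast
  have psi0add: "\<psi>0 (vadd p n u u') = vadd p n (\<psi>0 u) (\<psi>0 u')" if u: "u \<in> VV p n" and u': "u' \<in> VV p n" for u u'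
  proof -
    have "(ue p (\<psi>0 (vadd p n u u')), \<lambda>_. 0) = \<phi> (ue p (vadd p n u u'), \<lambda>_. 0)"
      using bspec[OF psi0 VV_vadd[OF p0, of n u u']] by simp
    also have "\<dots> = \<phi> ((ue p u, \<lambda>_. 0) \<otimes>\<^bsub>?G\<^esub> (ue p u', \<lambda>_. 0))" using ue_add[OF p0 u u'] by simp
    also have "\<dots> = \<phi> (ue p u, \<lambda>_. 0) \<otimes>\<^bsub>?H\<^esub> \<phi> (ue p u', \<lambda>_. 0)" using phimult[OF ueC[OF u] ueC[OF u']] .
    also have "\<dots> = (ue p (\<psi>0 u), \<lambda>_. 0) \<otimes>\<^bsub>?H\<^esub> (ue p (\<psi>0 u'), \<lambda>_. 0)" using psi0 u u' by simp
    also have "\<dots> = (ue p (vadd p n (\<psi>0 u) (\<psi>0 u')), \<lambda>_. 0)" using ue_add[OF p0] psi0 u u' by simp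
    finally show ?thesis using ue_inj[OF p0] by simp
  qed
  have psi0inj: "inj_on \<psi>0 (VV p n)"
  proof (rule inj_onI)
    fix u u' assume u: "u \<in> VV p n" and u': "u' \<in> VV p n" and e: "\<psi>0 u = \<psi>0 u'"
    have "\<phi> (ue p u, \<lambda>_. 0) = \<phi> (ue p u', \<lambda>_. 0)" using psi0 u u' e by simp
    then have "(ue p u, \<lambda>_. 0) = (ue p u', \<lambda>_. 0)" using inj_on_eq_iff[OF inj ueC[OF u, of A] ueC[OF u', of A]] by simp
    then show "u = u'" using ue_inj[OF p0] by simp
  qed
  have psi0surj: "\<psi>0 ` VV p n = VV p n"
  proof
    show "\<psi>0 ` VV p n \<subseteq> VV p n" using psi0 by blast
    show "VV p n \<subseteq> \<psi>0 ` VV p n"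
    proof
      fix u' assume u': "u' \<in> VV p n"
      obtain x where x: "x \<in> XX p n" "\<psi> (ue p u', \<lambda>_. 0) = (x, \<lambda>_. 0)" using Mpsi[OF ue_XX[OF p0 u']] by blast
      have xc: "(x, \<lambda>_. 0) \<in> carrier ?G" using x(1) p0 by (simp add: carrier_G zero_VV)
      have px: "\<phi> (x, \<lambda>_. 0) = (ue p u', \<lambda>_. 0)" using phipsi[OF ueC[OF u']] x(2) by simp
      have "\<phi> (pw ?G (x, \<lambda>_. 0) p) = pw ?H (\<phi> (x, \<lambda>_. 0)) p" using hom_pw[OF cloG hom xc] by blast
      also have "\<dots> = \<phi> (x, \<lambda>_. 0)" using px ue_pw[OF u'] by simp
      finally have "pw ?G (x, \<lambda>_. 0) p = (x, \<lambda>_. 0)"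
        using inj_on_eq_iff[OF inj pw_closed_G[OF p0 xc] xc] by simp
      then have "\<forall>j<n. of_nat p * x j \<in> \<int>" using pw_char[OF p0 x(1)] by blast
      then obtain u where u: "u \<in> VV p n" "x = ue p u" using Mp_char[OF p0 x(1)] by blast
      then have "(ue p (\<psi>0 u), \<lambda>_. 0) = (ue p u', \<lambda>_. 0)" using bspec[OF psi0 u(1)] px u(2) by simp
      then have "\<psi>0 u = u'" using ue_inj[OF p0] by simp
      then show "u' \<in> \<psi>0 ` VV p n" using u by blast
    qed
  qed
  have psi0bij: "bij_betw \<psi>0 (VV p n) (VV p n)" using psi0inj psi0surj by (simp add: bij_betw_def)
  have psi0addv: "additive p n \<psi>0" using psi0 psi0add by (simp add: additive_def)
  have Qinv: "invertible_mod p n (\<lambda>k j. \<psi>0 (ev k) j)"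
    using additive_invertible[OF p1 psi0addv psi0bij] .

  have key: "\<psi>0 (bu p n m A v w) = bu p n m A' (\<pi> v) (\<pi> w)" if v: "v \<in> VV p m" and w: "w \<in> VV p m" for v w
  proof -
    let ?g = "((\<lambda>_. 0), v)" and ?h = "((\<lambda>_. 0), w)"
    have buV: "bu p n m A v w \<in> VV p n" by (rule bu_VV[OF p0])
    have cmc: "(cm p n m A v w, \<lambda>_. 0) \<in> carrier ?G" using ueC[OF buV] cm_bu[OF p0] by simp
    have hgc: "?h \<otimes>\<^bsub>?G\<^esub> ?g \<in> carrier ?G" using cloG[OF topC[OF w] topC[OF v]] .
    have "\<phi> ?g \<otimes>\<^bsub>?H\<^esub> \<phi> ?h = \<phi> (?g \<otimes>\<^bsub>?G\<^esub> ?h)" using phimult[OF topC[OF v] topC[OF w]] by simp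
    also have "\<dots> = \<phi> ((cm p n m A v w, \<lambda>_. 0) \<otimes>\<^bsub>?G\<^esub> (?h \<otimes>\<^bsub>?G\<^esub> ?g))"
      using comm_G[OF p0 topC[OF v] topC[OF w]] by simp
    also have "\<dots> = \<phi> (cm p n m A v w, \<lambda>_. 0) \<otimes>\<^bsub>?H\<^esub> (\<phi> ?h \<otimes>\<^bsub>?H\<^esub> \<phi> ?g)"
      using phimult[OF cmc hgc] phimult[OF topC[OF w] topC[OF v]] by simp
    also have "\<phi> (cm p n m A v w, \<lambda>_. 0) = (ue p (\<psi>0 (bu p n m A v w)), \<lambda>_. 0)"
      using psi0 buV cm_bu[OF p0] by simp
    finally have E1: "\<phi> ?g \<otimes>\<^bsub>?H\<^esub> \<phi> ?h = (ue p (\<psi>0 (bu p n m A v w)), \<lambda>_. 0) \<otimes>\<^bsub>?H\<^esub> (\<phi> ?h \<otimes>\<^bsub>?H\<^esub> \<phi> ?g)" .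
    define s where "s = fst (\<phi> ?g)"
    define t where "t = fst (\<phi> ?h)"
    have s: "\<phi> ?g = (s, \<pi> v)" by (simp add: s_def \<pi>_def)
    have t: "\<phi> ?h = (t, \<pi> w)" by (simp add: t_def \<pi>_def)
    have sc: "(s, \<pi> v) \<in> carrier ?H" using phiC[OF topC[OF v]] s by simp
    have tc: "(t, \<pi> w) \<in> carrier ?H" using phiC[OF topC[OF w]] t by simp
    have E2: "\<phi> ?g \<otimes>\<^bsub>?H\<^esub> \<phi> ?h = (ue p (bu p n m A' (\<pi> v) (\<pi> w)), \<lambda>_. 0) \<otimes>\<^bsub>?H\<^esub> (\<phi> ?h \<otimes>\<^bsub>?H\<^esub> \<phi> ?g)"
      unfolding s t using comm_G[OF p0 sc tc] cm_bu[OF p0] by simp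
    define z where "z = \<phi> ?h \<otimes>\<^bsub>?H\<^esub> \<phi> ?g"
    have zc: "z \<in> carrier ?H" unfolding z_def using cloH[OF phiC[OF topC[OF w]] phiC[OF topC[OF v]]] .
    then have zV: "snd z \<in> VV p m" by (auto simp: carrier_G)
    have Z: "(ue p (\<psi>0 (bu p n m A v w)), \<lambda>_. 0) \<otimes>\<^bsub>?H\<^esub> (fst z, snd z) =
          (ue p (bu p n m A' (\<pi> v) (\<pi> w)), \<lambda>_. 0) \<otimes>\<^bsub>?H\<^esub> (fst z, snd z)"
      using E1 E2 unfolding z_def by simp
    have X1: "ue p (\<psi>0 (bu p n m A v w)) \<in> XX p n"
      using ue_XX[OF p0] bspec[OF psi0 buV] by simp
    have X2: "ue p (bu p n m A' (\<pi> v) (\<pi> w)) \<in> XX p n"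
      using ue_XX[OF p0 bu_VV[OF p0]] .
    have "ue p (\<psi>0 (bu p n m A v w)) = ue p (bu p n m A' (\<pi> v) (\<pi> w))"
      by (rule cancel_G[OF X1 X2 zV Z])
    then show ?thesis using ue_inj[OF p0] by blast
  qed

  show ?thesis unfolding weakly_congruent_def
  proof (intro exI conjI allI impI)
    show "invertible_mod p m (\<lambda>a c. \<rho> (ev a) c)" by (rule Pinv)
    show "invertible_mod p n (\<lambda>k j. \<psi>0 (ev k) j)" by (rule Qinv)
    fix j a b assume j: "j < n" and a: "a < m" and b: "b < m"
    let ?v = "\<rho> (ev a)" and ?w = "\<rho> (ev b)"
    have v: "?v \<in> VV p m" using rhoV ev_VV[OF p1 a] by blast
    have w: "?w \<in> VV p m" using rhoV ev_VV[OF p1 b] by blast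
    have pv: "\<pi> ?v = ev a" using pirho ev_VV[OF p1 a] by blast
    have pw': "\<pi> ?w = ev b" using pirho ev_VV[OF p1 b] by blast
    have sk': "skew_symmetric_mod p m (A' j)" using skA' j by (simp add: skew_tuple_def)
    have "[A' j a b = (\<Sum>c<m. \<Sum>d<m. ev a c * A' j c d * ev b d)] (mod int p)"
      using a b by (simp add: sum_ev_left sum_ev_right)
    also have "[(\<Sum>c<m. \<Sum>d<m. ev a c * A' j c d * ev b d) = coc m (A' j) (ev a) (ev b) - coc m (A' j) (ev b) (ev a)] (mod int p)"
      using skew_coc[OF sk'] by (simp add: cong_sym)
    also have "[coc m (A' j) (ev a) (ev b) - coc m (A' j) (ev b) (ev a) = bu p n m A' (ev a) (ev b) j] (mod int p)"
      using j by (simp add: bu_def cocycle_coc cong_sym)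
    also have "bu p n m A' (ev a) (ev b) j = \<psi>0 (bu p n m A ?v ?w) j" using key[OF v w] pv pw' by simp
    also have "[\<psi>0 (bu p n m A ?v ?w) j = (\<Sum>k<n. bu p n m A ?v ?w k * \<psi>0 (ev k) j)] (mod int p)"
      using additive_formula[OF p1 psi0addv bu_VV[OF p0] j] .
    also have "(\<Sum>k<n. bu p n m A ?v ?w k * \<psi>0 (ev k) j) = (\<Sum>k<n. \<psi>0 (ev k) j * bu p n m A ?v ?w k)"
      by (simp only: mult.commute)
    also have "[(\<Sum>k<n. \<psi>0 (ev k) j * bu p n m A ?v ?w k) =
                (\<Sum>k<n. \<psi>0 (ev k) j * (\<Sum>c<m. \<Sum>d<m. ?v c * A k c d * ?w d))] (mod int p)"
    proof (rule cong_sum)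
      fix k assume k: "k \<in> {..<n}"
      have sk: "skew_symmetric_mod p m (A k)" using skA k by (simp add: skew_tuple_def)
      have "[bu p n m A ?v ?w k = (\<Sum>c<m. \<Sum>d<m. ?v c * A k c d * ?w d)] (mod int p)"
        using k skew_coc[OF sk, of ?v ?w] by (simp add: bu_def cocycle_coc)
      then show "[\<psi>0 (ev k) j * bu p n m A ?v ?w k = \<psi>0 (ev k) j * (\<Sum>c<m. \<Sum>d<m. ?v c * A k c d * ?w d)] (mod int p)"
        by (rule cong_scalar_left)
    qed
    finally show "[A' j a b = (\<Sum>i<n. \<psi>0 (ev i) j * (\<Sum>c<m. \<Sum>d<m. \<rho> (ev a) c * A i c d * \<rho> (ev b) d))] (mod int p)"
      by (simp add: mult.assoc)
  qed
qed



section \<open>Congruent tuples give equal groups\<close>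

lemma dvd_div_Ints: "int p dvd z \<Longrightarrow> (of_int z / of_nat p :: rat) \<in> \<int>"
proof -
  assume "int p dvd z"
  then obtain t where t: "z = int p * t" by (elim dvdE)
  show ?thesis
  proof (cases "p = 0")
    case True then show ?thesis by simp
  next
    case False
    then have "(of_int z / of_nat p :: rat) = of_int t" unfolding t by simp
    then show ?thesis by simp
  qed
qed

lemma cong_group:
  assumes "\<forall>k<n. \<forall>i<m. \<forall>j<m. [A k i j = B k i j] (mod int p)"
  shows "chernikov_group p n m A = chernikov_group p n m B"
proof -
  have key: "frac (X + of_int (cocycle m A k v w) / of_nat p) = frac (X + of_int (cocycle m B k v w) / of_nat p)"
    if k: "k < n" for X :: rat and k v w
  proof -
    have "[cocycle m A k v w = cocycle m B k v w] (mod int p)"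
      unfolding cocycle_def
    proof (rule cong_sum, rule cong_sum)
      fix j i assume "j \<in> {..<m}" "i \<in> {..<j}"
      then have "[A k i j = B k i j] (mod int p)" using assms k by auto
      then show "[v i * w j * A k i j = v i * w j * B k i j] (mod int p)" by (rule cong_scalar_left)
    qed
    then have "int p dvd (cocycle m A k v w - cocycle m B k v w)" by (simp add: cong_iff_dvd_diff)
    then have "(of_int (cocycle m A k v w - cocycle m B k v w) / of_nat p :: rat) \<in> \<int>" by (rule dvd_div_Ints)
    then show ?thesis unfolding frac_eq_iff_Ints by (simp add: diff_divide_distrib)
  qed
  show ?thesis unfolding chernikov_group_def by (simp add: fun_eq_iff key split: prod.splits)
qed

section \<open>Bottom isomorphism\<close>

definition Lm :: "nat \<Rightarrow> (nat \<Rightarrow> nat \<Rightarrow> int) \<Rightarrow> (nat \<Rightarrow> rat) \<Rightarrow> nat \<Rightarrow> rat" where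
  "Lm n Q x = (\<lambda>j. \<Sum>i<n. of_int (Q i j) * x i)"

definition red :: "nat \<Rightarrow> (nat \<Rightarrow> rat) \<Rightarrow> nat \<Rightarrow> rat" where
  "red n x = (\<lambda>k. if k < n then frac (x k) else 0)"

lemma red_XX: "(\<And>k. k < n \<Longrightarrow> pdy p (x k)) \<Longrightarrow> red n x \<in> XX p n"
  unfolding red_def by (rule XX_fracI)

lemma Lm_pdy: "(\<And>i. i < n \<Longrightarrow> pdy p (x i)) \<Longrightarrow> pdy p (Lm n Q x j)"
  unfolding Lm_def by (rule pdy_sum) (auto intro: pdy_mult_int)

lemma frac_lin: "frac (\<Sum>i\<in>S. of_int (c i) * frac (a i :: rat)) = frac (\<Sum>i\<in>S. of_int (c i) * a i)"
proof -
  have "(\<Sum>i\<in>S. of_int (c i) * frac (a i)) - (\<Sum>i\<in>S. of_int (c i) * a i) = (\<Sum>i\<in>S. of_int (c i) * (frac (a i) - a i))"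
    by (simp add: sum_subtractf[symmetric] right_diff_distrib)
  also have "\<dots> = (\<Sum>i\<in>S. of_int (c i) * (- of_int \<lfloor>a i\<rfloor>))" by (simp add: frac_def)
  also have "\<dots> \<in> \<int>" by (intro Ints_sum Ints_mult) auto
  finally show ?thesis unfolding frac_eq_iff_Ints .
qed

lemma cocycle_Q:
  "cocycle m (\<lambda>j a b. \<Sum>i<n. Q i j * A i a b) j v w = (\<Sum>i<n. Q i j * cocycle m A i v w)"
proof -
  have "cocycle m (\<lambda>j a b. \<Sum>i<n. Q i j * A i a b) j v w = (\<Sum>j'<m. \<Sum>i'<j'. \<Sum>i<n. Q i j * (v i' * w j' * A i i' j'))"
    unfolding cocycle_def by (simp add: sum_distrib_left mult.assoc mult.left_commute)
  also have "\<dots> = (\<Sum>j'<m. \<Sum>i<n. \<Sum>i'<j'. Q i j * (v i' * w j' * A i i' j'))"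
    by (rule sum.cong[OF refl]) (rule sum.swap)
  also have "\<dots> = (\<Sum>i<n. \<Sum>j'<m. \<Sum>i'<j'. Q i j * (v i' * w j' * A i i' j'))"
    by (rule sum.swap)
  also have "\<dots> = (\<Sum>i<n. Q i j * cocycle m A i v w)"
    unfolding cocycle_def by (simp add: sum_distrib_left)
  finally show ?thesis .
qed

lemma inv_exact:
  assumes "p > 0" "\<forall>i<d. \<forall>j<d. [(\<Sum>l<d. P i l * P' l j) = (if i = j then 1 else 0)] (mod int p)"
  shows "\<exists>N. \<forall>i<d. \<forall>j<d. (\<Sum>l<d. P i l * P' l j) = (if i = j then 1 else 0) + int p * N i j"
proof -
  define N where "N i j = ((\<Sum>l<d. P i l * P' l j) - (if i = j then 1 else 0)) div int p" for i j
  have "(\<Sum>l<d. P i l * P' l j) = (if i = j then 1 else 0) + int p * N i j" if "i < d" "j < d" for i j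
  proof -
    have "int p dvd ((\<Sum>l<d. P i l * P' l j) - (if i = j then 1 else 0))"
      using assms(2) that by (simp add: cong_iff_dvd_diff)
    then show ?thesis unfolding N_def by (simp add: dvd_mult_div_cancel)
  qed
  then show ?thesis by blast
qed

lemma pdy_mono: "q * of_nat (p ^ e) \<in> \<int> \<Longrightarrow> q * of_nat (p ^ (e + f)) \<in> \<int>"
proof -
  assume h: "q * of_nat (p ^ e) \<in> \<int>"
  have "q * of_nat (p ^ (e + f)) = (q * of_nat (p ^ e)) * of_nat (p ^ f)" by (simp add: power_add mult.assoc)
  also have "\<dots> \<in> \<int>" using h by (meson Ints_mult Ints_of_nat)
  finally show ?thesis .
qed

lemma pdy_common: "(\<And>i. i < (n::nat) \<Longrightarrow> pdy p (z i)) \<Longrightarrow> \<exists>e. \<forall>i<n. z i * of_nat (p ^ e) \<in> \<int>"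
proof (induction n)
  case 0 then show ?case by simp
next
  case (Suc n)
  then obtain e where e: "\<forall>i<n. z i * of_nat (p ^ e) \<in> \<int>" by auto
  obtain f where f: "z n * of_nat (p ^ f) \<in> \<int>" using Suc.prems[of n] unfolding pdy_def by auto
  have "\<forall>i<Suc n. z i * of_nat (p ^ (e + f)) \<in> \<int>"
  proof (intro allI impI)
    fix i assume "i < Suc n"
    then consider "i < n" | "i = n" by linarith
    then show "z i * of_nat (p ^ (e + f)) \<in> \<int>"
    proof cases
      case 1 then show ?thesis using e pdy_mono by blast
    next
      case 2 then show ?thesis using pdy_mono[OF f, of e] by (simp add: add.commute)
    qed
  qed
  then show ?case by blast
qed

lemma inj_core:
  assumes p: "p > 0"
    and N: "\<forall>i<n. \<forall>l<n. (\<Sum>j<n. Q i j * Q' j l) = (if i = l then 1 else 0) + int p * N i l"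
    and z: "\<And>i. i < n \<Longrightarrow> pdy p (z i)"
    and L: "\<And>j. j < n \<Longrightarrow> Lm n Q z j \<in> \<int>"
  shows "\<forall>i<n. z i \<in> \<int>"
proof -
  have H: "z l + of_nat p * (\<Sum>i<n. of_int (N i l) * z i) \<in> \<int>" if l: "l < n" for l
  proof -
    have "(\<Sum>j<n. Lm n Q z j * of_int (Q' j l)) \<in> \<int>" using L by (intro Ints_sum Ints_mult) auto
    also have "(\<Sum>j<n. Lm n Q z j * of_int (Q' j l)) = (\<Sum>j<n. \<Sum>i<n. z i * (of_int (Q i j) * of_int (Q' j l)))"
      unfolding Lm_def sum_distrib_right by (simp add: mult_ac)
    also have "\<dots> = (\<Sum>i<n. \<Sum>j<n. z i * (of_int (Q i j) * of_int (Q' j l)))" by (rule sum.swap)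
    also have "\<dots> = (\<Sum>i<n. z i * of_int (\<Sum>j<n. Q i j * Q' j l))"
      by (simp add: sum_distrib_left)
    also have "\<dots> = (\<Sum>i<n. z i * of_int ((if i = l then 1 else 0) + int p * N i l))"
      using N l by (intro sum.cong) auto
    also have "\<dots> = (\<Sum>i<n. (if i = l then z i else 0)) + of_nat p * (\<Sum>i<n. of_int (N i l) * z i)"
    proof -
      have t: "z i * of_int ((if i = l then 1 else 0) + int p * N i l) = (if i = l then z i else 0) + of_nat p * (of_int (N i l) * z i)" for i
        by (cases "i = l") (simp_all add: algebra_simps)
      show ?thesis by (simp only: t sum.distrib sum_distrib_left)
    qed
    also have "\<dots> = z l + of_nat p * (\<Sum>i<n. of_int (N i l) * z i)" using l by simp
    finally show ?thesis .
  qed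
  obtain e where e: "\<forall>i<n. z i * of_nat (p ^ e) \<in> \<int>" using pdy_common[of n p z] z by blast
  have "\<forall>i<n. z i * of_nat (p ^ e) \<in> \<int> \<Longrightarrow> \<forall>i<n. z i \<in> \<int>" for e
  proof (induction e)
    case 0 then show ?case by simp
  next
    case (Suc e)
    have "z l * of_nat (p ^ e) \<in> \<int>" if l: "l < n" for l
    proof -
      have "z l * of_nat (p ^ e) = (z l + of_nat p * (\<Sum>i<n. of_int (N i l) * z i)) * of_nat (p ^ e)
            - (\<Sum>i<n. of_int (N i l) * (z i * of_nat (p ^ Suc e)))"
        by (simp add: algebra_simps sum_distrib_left sum_distrib_right)
      also have "\<dots> \<in> \<int>"
      proof (rule Ints_diff)
        show "(z l + of_nat p * (\<Sum>i<n. of_int (N i l) * z i)) * of_nat (p ^ e) \<in> \<int>"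
          using H[OF l] by (meson Ints_mult Ints_of_nat)
        show "(\<Sum>i<n. of_int (N i l) * (z i * of_nat (p ^ Suc e))) \<in> \<int>"
        proof (rule Ints_sum)
          fix i assume "i \<in> {..<n}"
          then have "z i * of_nat (p ^ Suc e) \<in> \<int>" using Suc.prems by blast
          then show "of_int (N i l) * (z i * of_nat (p ^ Suc e)) \<in> \<int>" by (meson Ints_mult Ints_of_int)
        qed
      qed
      finally show ?thesis .
    qed
    then show ?case using Suc.IH by blast
  qed
  then show ?thesis using e by blast
qed



lemma Lm_diff: "Lm n Q (\<lambda>i. a i - b i) j = Lm n Q a j - Lm n Q b j"
  unfolding Lm_def by (simp add: sum_subtractf[symmetric] right_diff_distrib)

lemma surj_core:
  assumes p: "p > 0"
    and M: "\<forall>i<n. \<forall>j<n. (\<Sum>l<n. Q' i l * Q l j) = (if i = j then 1 else 0) + int p * M i j"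
    and y: "y \<in> XX p n"
  shows "\<exists>x\<in>XX p n. red n (Lm n Q x) = y"
proof -
  define K where "K t j = t j + of_nat p * (\<Sum>l<n. of_int (M l j) * t l)" for t :: "nat \<Rightarrow> rat" and j
  have K_diff: "K (\<lambda>i. a i - b i) j = K a j - K b j" for a b j
  proof -
    have e: "(\<Sum>l<n. of_int (M l j) * (a l - b l)) = (\<Sum>l<n. of_int (M l j) * a l) - (\<Sum>l<n. of_int (M l j) * b l)"
      by (simp add: right_diff_distrib sum_subtractf)
    show ?thesis unfolding K_def e by (simp add: algebra_simps)
  qed
  have claim: "\<forall>y. (\<forall>i<n. y i * of_nat (p ^ e) \<in> \<int>) \<longrightarrow> (\<exists>t. (\<forall>i<n. pdy p (t i)) \<and> (\<forall>j<n. K t j - y j \<in> \<int>))" for e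
  proof (induction e)
    case 0
    show ?case
    proof (intro allI impI)
      fix y :: "nat \<Rightarrow> rat" assume Y: "\<forall>i<n. y i * of_nat (p ^ 0) \<in> \<int>"
      have "K (\<lambda>_. 0) j = 0" for j by (simp add: K_def)
      then show "\<exists>t. (\<forall>i<n. pdy p (t i)) \<and> (\<forall>j<n. K t j - y j \<in> \<int>)"
        using Y by (intro exI[of _ "\<lambda>_. 0"]) (auto intro: pdy_int)
    qed
  next
    case (Suc e)
    show ?case
    proof (intro allI impI)
      fix y :: "nat \<Rightarrow> rat" assume Y: "\<forall>i<n. y i * of_nat (p ^ Suc e) \<in> \<int>"
      define y' where "y' j = of_nat p * (\<Sum>l<n. of_int (M l j) * y l)" for j
      have "y' i * of_nat (p ^ e) \<in> \<int>" if "i < n" for i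
      proof -
        have "y' i * of_nat (p ^ e) = (\<Sum>l<n. of_int (M l i) * (y l * of_nat (p ^ Suc e)))"
          unfolding y'_def by (simp add: sum_distrib_left sum_distrib_right algebra_simps)
        also have "\<dots> \<in> \<int>"
        proof (rule Ints_sum)
          fix l assume "l \<in> {..<n}"
          then have "y l * of_nat (p ^ Suc e) \<in> \<int>" using Y by blast
          then show "of_int (M l i) * (y l * of_nat (p ^ Suc e)) \<in> \<int>" by (meson Ints_mult Ints_of_int)
        qed
        finally show ?thesis .
      qed
      then obtain t where t: "\<forall>i<n. pdy p (t i)" "\<forall>j<n. K t j - y' j \<in> \<int>" using Suc.IH by blast
      define s where "s i = y i - t i" for i
      have ypdy: "pdy p (y i)" if "i < n" for i using Y that unfolding pdy_def by blast
      have "\<forall>i<n. pdy p (s i)" using t(1) ypdy by (simp add: s_def pdy_diff)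
      moreover have "\<forall>j<n. K s j - y j \<in> \<int>"
      proof (intro allI impI)
        fix j assume j: "j < n"
        have "K s j - y j = - (K t j - y' j)"
          using K_diff[of y t j] unfolding s_def by (simp add: K_def y'_def)
        moreover have "- (K t j - y' j) \<in> \<int>" using t(2) j by (intro Ints_minus) blast
        ultimately show "K s j - y j \<in> \<int>" by simp
      qed
      ultimately show "\<exists>t. (\<forall>i<n. pdy p (t i)) \<and> (\<forall>j<n. K t j - y j \<in> \<int>)" by blast
    qed
  qed
  obtain e where e: "\<forall>i<n. y i * of_nat (p ^ e) \<in> \<int>" using pdy_common[of n p y] XX_pdy[OF y] by blast
  obtain t where t: "\<forall>i<n. pdy p (t i)" "\<forall>j<n. K t j - y j \<in> \<int>" using claim[of e] e by blast
  define x where "x = red n (Lm n Q' t)"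
  have xX: "x \<in> XX p n" unfolding x_def using t(1) by (intro red_XX Lm_pdy) auto
  have "red n (Lm n Q x) = y"
  proof
    fix j show "red n (Lm n Q x) j = y j"
    proof (cases "j < n")
      case True
      have "Lm n Q x j = (\<Sum>i<n. of_int (Q i j) * frac (Lm n Q' t i))"
        unfolding Lm_def x_def red_def by (rule sum.cong) auto
      then have "frac (Lm n Q x j) = frac (\<Sum>i<n. of_int (Q i j) * Lm n Q' t i)"
        by (simp add: frac_lin)
      also have "(\<Sum>i<n. of_int (Q i j) * Lm n Q' t i) = (\<Sum>l<n. t l * of_int (\<Sum>i<n. Q' l i * Q i j))"
      proof -
        have "(\<Sum>i<n. of_int (Q i j) * Lm n Q' t i) = (\<Sum>i<n. \<Sum>l<n. t l * (of_int (Q' l i) * of_int (Q i j)))"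
          unfolding Lm_def by (simp add: sum_distrib_left mult_ac)
        also have "\<dots> = (\<Sum>l<n. \<Sum>i<n. t l * (of_int (Q' l i) * of_int (Q i j)))" by (rule sum.swap)
        also have "\<dots> = (\<Sum>l<n. t l * of_int (\<Sum>i<n. Q' l i * Q i j))" by (simp add: sum_distrib_left)
        finally show ?thesis .
      qed
      also have "\<dots> = (\<Sum>l<n. t l * of_int ((if l = j then 1 else 0) + int p * M l j))"
        using M True by (intro sum.cong) auto
      also have "\<dots> = K t j"
      proof -
        have tt: "t l * of_int ((if l = j then 1 else 0) + int p * M l j) = (if l = j then t l else 0) + of_nat p * (of_int (M l j) * t l)" for l
          by (cases "l = j") (simp_all add: algebra_simps)
        show ?thesis using True by (simp only: tt sum.distrib sum_distrib_left K_def) simp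
      qed
      finally have "frac (Lm n Q x j) = frac (K t j)" .
      also have "\<dots> = frac (y j)" using t(2) True by (simp add: frac_eq_iff_Ints)
      also have "\<dots> = y j" using XX_frac[OF y True] .
      finally show ?thesis using True by (simp add: red_def)
    next
      case False then show ?thesis using y by (simp add: red_def XX_def)
    qed
  qed
  then show ?thesis using xX by blast
qed

lemma bottom_iso:
  assumes p: "p > 1" and Q: "invertible_mod p n Q"
  shows "chernikov_group p n m A \<cong> chernikov_group p n m (\<lambda>j a b. \<Sum>i<n. Q i j * A i a b)"
proof -
  let ?B = "\<lambda>j a b. \<Sum>i<n. Q i j * A i a b"
  let ?G = "chernikov_group p n m A" and ?H = "chernikov_group p n m ?B"
  have p0: "p > 0" using p by simp
  obtain Q' where Q': "\<forall>i<n. \<forall>j<n. [(\<Sum>l<n. Q i l * Q' l j) = (if i = j then 1 else 0)] (mod int p)"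
     "\<forall>i<n. \<forall>j<n. [(\<Sum>l<n. Q' i l * Q l j) = (if i = j then 1 else 0)] (mod int p)"
    using Q unfolding invertible_mod_def by blast
  obtain N where N: "\<forall>i<n. \<forall>l<n. (\<Sum>j<n. Q i j * Q' j l) = (if i = l then 1 else 0) + int p * N i l"
    using inv_exact[OF p0 Q'(1)] by blast
  obtain M where M: "\<forall>i<n. \<forall>j<n. (\<Sum>l<n. Q' i l * Q l j) = (if i = j then 1 else 0) + int p * M i j"
    using inv_exact[OF p0 Q'(2)] by blast
  define \<phi> where "\<phi> g = (red n (Lm n Q (fst g)), snd g)" for g :: "(nat \<Rightarrow> rat) \<times> (nat \<Rightarrow> int)"
  have LX: "red n (Lm n Q x) \<in> XX p n" if "x \<in> XX p n" for x
    using that by (intro red_XX Lm_pdy) (auto simp: XX_pdy)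
  have C: "\<phi> g \<in> carrier ?H" if "g \<in> carrier ?G" for g
    using that LX by (auto simp: \<phi>_def carrier_G)
  have hom: "\<phi> \<in> hom ?G ?H"
  proof (rule homI)
    show "\<phi> g \<in> carrier ?H" if "g \<in> carrier ?G" for g using C that .
    show "\<phi> (g \<otimes>\<^bsub>?G\<^esub> h) = \<phi> g \<otimes>\<^bsub>?H\<^esub> \<phi> h" if g: "g \<in> carrier ?G" and h: "h \<in> carrier ?G" for g h
    proof -
      obtain x v where gxv: "g = (x, v)" by (cases g)
      obtain y w where hyw: "h = (y, w)" by (cases h)
      have x: "x \<in> XX p n" using g gxv by (simp add: carrier_G)
      have y: "y \<in> XX p n" using h hyw by (simp add: carrier_G)
      define z where "z = (\<lambda>k. if k < n then frac (x k + y k + of_int (cocycle m A k v w) / of_nat p) else 0)"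
      have "red n (Lm n Q z) j = (if j < n then frac (red n (Lm n Q x) j + red n (Lm n Q y) j + of_int (cocycle m ?B j v w) / of_nat p) else 0)" for j
      proof (cases "j < n")
        case True
        have "Lm n Q z j = (\<Sum>i<n. of_int (Q i j) * frac (x i + y i + of_int (cocycle m A i v w) / of_nat p))"
          unfolding Lm_def z_def by (rule sum.cong) auto
        then have "frac (Lm n Q z j) = frac (\<Sum>i<n. of_int (Q i j) * (x i + y i + of_int (cocycle m A i v w) / of_nat p))"
          by (simp add: frac_lin)
        also have "(\<Sum>i<n. of_int (Q i j) * (x i + y i + of_int (cocycle m A i v w) / of_nat p)) =
              Lm n Q x j + Lm n Q y j + of_int (cocycle m ?B j v w) / of_nat p"
          unfolding cocycle_Q Lm_def by (simp add: distrib_left sum.distrib sum_divide_distrib)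
        also have "frac \<dots> = frac (frac (Lm n Q x j) + frac (Lm n Q y j) + of_int (cocycle m ?B j v w) / of_nat p)"
          unfolding frac_eq_iff_Ints by (simp add: frac_def)
        finally show ?thesis using True by (simp add: red_def)
      qed (simp add: red_def)
      then have "red n (Lm n Q z) = (\<lambda>j. if j < n then frac (red n (Lm n Q x) j + red n (Lm n Q y) j + of_int (cocycle m ?B j v w) / of_nat p) else 0)"
        by (rule ext)
      then show ?thesis unfolding gxv hyw \<phi>_def by (simp add: mult_G z_def)
    qed
  qed
  have inj: "inj_on \<phi> (carrier ?G)"
  proof (rule inj_onI)
    fix g h assume g: "g \<in> carrier ?G" and h: "h \<in> carrier ?G" and e: "\<phi> g = \<phi> h"
    obtain x v where gxv: "g = (x, v)" by (cases g)
    obtain y w where hyw: "h = (y, w)" by (cases h)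
    have x: "x \<in> XX p n" using g gxv by (simp add: carrier_G)
    have y: "y \<in> XX p n" using h hyw by (simp add: carrier_G)
    have vw: "v = w" using e gxv hyw by (simp add: \<phi>_def)
    have R: "red n (Lm n Q x) = red n (Lm n Q y)" using e gxv hyw by (simp add: \<phi>_def)
    have "Lm n Q (\<lambda>i. x i - y i) j \<in> \<int>" if "j < n" for j
    proof -
      have "frac (Lm n Q x j) = frac (Lm n Q y j)" using fun_cong[OF R, of j] that by (simp add: red_def)
      then show ?thesis unfolding Lm_diff frac_eq_iff_Ints .
    qed
    moreover have "pdy p (x i - y i)" if "i < n" for i using x y that by (simp add: pdy_diff XX_pdy)
    ultimately have I: "\<forall>i<n. x i - y i \<in> \<int>"
      using inj_core[OF p0 N, of "\<lambda>i. x i - y i"] by blast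
    have "x = y"
    proof
      fix i show "x i = y i"
      proof (cases "i < n")
        case True
        then have "frac (x i) = frac (y i)" using I by (simp add: frac_eq_iff_Ints)
        then show ?thesis using XX_frac[OF x True] XX_frac[OF y True] by simp
      next
        case False then show ?thesis using x y by (simp add: XX_def)
      qed
    qed
    then show "g = h" using gxv hyw vw by simp
  qed
  have surj: "\<phi> ` carrier ?G = carrier ?H"
  proof
    show "\<phi> ` carrier ?G \<subseteq> carrier ?H" using C by blast
    show "carrier ?H \<subseteq> \<phi> ` carrier ?G"
    proof
      fix h assume h: "h \<in> carrier ?H"
      obtain y w where hyw: "h = (y, w)" by (cases h)
      have y: "y \<in> XX p n" and w: "w \<in> VV p m" using h hyw by (auto simp: carrier_G)
      obtain x where x: "x \<in> XX p n" "red n (Lm n Q x) = y" using surj_core[OF p0 M y] by blast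
      have "(x, w) \<in> carrier ?G" using x w by (simp add: carrier_G)
      moreover have "\<phi> (x, w) = h" using x hyw by (simp add: \<phi>_def)
      ultimately show "h \<in> \<phi> ` carrier ?G" by force
    qed
  qed
  have "\<phi> \<in> iso ?G ?H" using hom inj surj by (simp add: iso_def bij_betw_def)
  then show ?thesis by (rule is_isoI)
qed



section \<open>Quadratic refinements\<close>

definition B2 :: "nat \<Rightarrow> (nat \<Rightarrow> nat \<Rightarrow> int) \<Rightarrow> (nat \<Rightarrow> int) \<Rightarrow> (nat \<Rightarrow> int) \<Rightarrow> int" where
  "B2 m S x y = (\<Sum>a<m. \<Sum>b<m. x a * y b * S a b)"

definition L1 :: "nat \<Rightarrow> (nat \<Rightarrow> nat \<Rightarrow> int) \<Rightarrow> (nat \<Rightarrow> int) \<Rightarrow> int" where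
  "L1 m S x = (\<Sum>a<m. S a a * x a)"

definition Q2 :: "nat \<Rightarrow> nat \<Rightarrow> (nat \<Rightarrow> nat \<Rightarrow> int) \<Rightarrow> (nat \<Rightarrow> int) \<Rightarrow> int" where
  "Q2 p m S x = B2 m S x x + (int p - 2) * L1 m S x"

lemma B2_add_left: "B2 m S (\<lambda>a. x a + y a) z = B2 m S x z + B2 m S y z"
  by (simp add: B2_def distrib_right sum.distrib)

lemma B2_add_right: "B2 m S z (\<lambda>a. x a + y a) = B2 m S z x + B2 m S z y"
  by (simp add: B2_def distrib_left distrib_right sum.distrib)

lemma B2_smult_left: "B2 m S (\<lambda>a. c * x a) z = c * B2 m S x z"
  by (simp add: B2_def sum_distrib_left mult_ac)

lemma B2_smult_right: "B2 m S z (\<lambda>a. c * x a) = c * B2 m S z x"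
  by (simp add: B2_def sum_distrib_left mult_ac)

lemma B2_sym: assumes "\<forall>a b. S a b = S b a" shows "B2 m S x y = B2 m S y x"
proof -
  have "B2 m S x y = (\<Sum>b<m. \<Sum>a<m. x a * y b * S a b)" unfolding B2_def by (rule sum.swap)
  also have "\<dots> = B2 m S y x" unfolding B2_def using assms by (simp add: mult_ac)
  finally show ?thesis .
qed

lemma L1_add: "L1 m S (\<lambda>a. x a + y a) = L1 m S x + L1 m S y"
  by (simp add: L1_def distrib_left sum.distrib)

lemma L1_smult: "L1 m S (\<lambda>a. c * x a) = c * L1 m S x"
  by (simp add: L1_def sum_distrib_left mult_ac)

lemma Q2_cong: "(\<And>a. a < m \<Longrightarrow> x a = x' a) \<Longrightarrow> Q2 p m S x = Q2 p m S x'"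
  unfolding Q2_def B2_def L1_def by simp

lemma B2_L1_even:
  assumes "\<forall>a b. S a b = S b a"
  shows "even (B2 m S x x - L1 m S x)"
proof (induction m)
  case 0 then show ?case by (simp add: B2_def L1_def)
next
  case (Suc t)
  have e1: "B2 (Suc t) S x x = B2 t S x x + 2 * (\<Sum>a<t. x a * x t * S a t) + x t * x t * S t t"
  proof -
    have "B2 (Suc t) S x x = B2 t S x x + (\<Sum>a<t. x a * x t * S a t) + (\<Sum>b<t. x t * x b * S t b) + x t * x t * S t t"
      by (simp add: B2_def sum.distrib algebra_simps)
    moreover have "(\<Sum>b<t. x t * x b * S t b) = (\<Sum>a<t. x a * x t * S a t)"
      using assms by (simp add: mult_ac)
    ultimately show ?thesis by simp
  qed
  have e2: "L1 (Suc t) S x = L1 t S x + S t t * x t" by (simp add: L1_def)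
  have "B2 (Suc t) S x x - L1 (Suc t) S x = (B2 t S x x - L1 t S x) + 2 * (\<Sum>a<t. x a * x t * S a t) + (x t * x t - x t) * S t t"
    unfolding e1 e2 by (simp add: algebra_simps)
  moreover have "even ((x t * x t - x t) * S t t)"
  proof -
    have "x t * x t - x t = x t * (x t - 1)" by (simp add: algebra_simps)
    moreover have "even (x t * (x t - 1))" by simp
    ultimately show ?thesis by simp
  qed
  ultimately show ?case using Suc.IH by simp
qed

lemma Q2_add:
  assumes "\<forall>a b. S a b = S b a"
  shows "Q2 p m S (\<lambda>a. x a + y a) = Q2 p m S x + Q2 p m S y + 2 * B2 m S x y"
proof -
  have "B2 m S (\<lambda>a. x a + y a) (\<lambda>a. x a + y a) = B2 m S x x + B2 m S y y + B2 m S x y + B2 m S y x"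
    by (simp add: B2_add_left B2_add_right)
  moreover have "B2 m S y x = B2 m S x y" using B2_sym[OF assms] .
  ultimately show ?thesis unfolding Q2_def L1_add by (simp add: algebra_simps)
qed

lemma Q2_shift:
  assumes "\<forall>a b. S a b = S b a"
  shows "(2 * int p) dvd (Q2 p m S (\<lambda>a. z a + (- int p) * k a) - Q2 p m S z)"
proof -
  let ?c = "- int p"
  have B: "B2 m S (\<lambda>a. z a + ?c * k a) (\<lambda>a. z a + ?c * k a) = B2 m S z z + 2 * ?c * B2 m S z k + ?c * ?c * B2 m S k k"
  proof -
    have "B2 m S (\<lambda>a. z a + ?c * k a) (\<lambda>a. z a + ?c * k a) =
       B2 m S z z + ?c * B2 m S z k + ?c * B2 m S k z + ?c * (?c * B2 m S k k)"
      by (simp only: B2_add_left B2_add_right B2_smult_left B2_smult_right)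
    moreover have "B2 m S k z = B2 m S z k" using B2_sym[OF assms] .
    ultimately show ?thesis by (simp add: algebra_simps)
  qed
  have L: "L1 m S (\<lambda>a. z a + ?c * k a) = L1 m S z + ?c * L1 m S k"
    by (simp only: L1_add L1_smult)
  obtain r where r: "B2 m S k k - L1 m S k = 2 * r" using B2_L1_even[OF assms, of m k] by (elim evenE)
  have "Q2 p m S (\<lambda>a. z a + ?c * k a) - Q2 p m S z =
      2 * int p * (- B2 m S z k + int p * r + L1 m S k)"
  proof -
    have "Q2 p m S (\<lambda>a. z a + ?c * k a) - Q2 p m S z =
       2 * ?c * B2 m S z k + int p * int p * B2 m S k k - int p * (int p - 2) * L1 m S k"
      unfolding Q2_def B L by (simp add: algebra_simps)
    also have "\<dots> = 2 * ?c * B2 m S z k + int p * int p * (B2 m S k k - L1 m S k) + 2 * int p * L1 m S k"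
      by (simp add: algebra_simps)
    also have "\<dots> = 2 * int p * (- B2 m S z k + int p * r + L1 m S k)"
      unfolding r by (simp add: algebra_simps)
    finally show ?thesis .
  qed
  then show ?thesis by simp
qed

definition matv :: "nat \<Rightarrow> nat \<Rightarrow> (nat \<Rightarrow> nat \<Rightarrow> int) \<Rightarrow> (nat \<Rightarrow> int) \<Rightarrow> (nat \<Rightarrow> int)" where
  "matv p m T v = (\<lambda>c. if c < m then (\<Sum>a<m. T c a * v a) mod int p else 0)"

lemma matv_VV: "p > 0 \<Longrightarrow> matv p m T v \<in> VV p m"
  by (auto simp: matv_def VV_def)

lemma matv_inv:
  assumes p: "p > 0" and ST: "\<forall>i<m. \<forall>j<m. [(\<Sum>l<m. S i l * T l j) = (if i = j then 1 else 0)] (mod int p)"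
    and v: "v \<in> VV p m"
  shows "matv p m S (matv p m T v) = v"
proof
  fix e show "matv p m S (matv p m T v) e = v e"
  proof (cases "e < m")
    case True
    have "[(\<Sum>c<m. S e c * matv p m T v c) = (\<Sum>c<m. S e c * (\<Sum>a<m. T c a * v a))] (mod int p)"
      by (rule cong_sum) (auto simp: matv_def intro: cong_scalar_left)
    also have "(\<Sum>c<m. S e c * (\<Sum>a<m. T c a * v a)) = (\<Sum>a<m. (\<Sum>c<m. S e c * T c a) * v a)"
    proof -
      have "(\<Sum>c<m. S e c * (\<Sum>a<m. T c a * v a)) = (\<Sum>c<m. \<Sum>a<m. S e c * T c a * v a)"
        by (simp add: sum_distrib_left mult_ac)
      also have "\<dots> = (\<Sum>a<m. \<Sum>c<m. S e c * T c a * v a)" by (rule sum.swap)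
      also have "\<dots> = (\<Sum>a<m. (\<Sum>c<m. S e c * T c a) * v a)" by (simp add: sum_distrib_right)
      finally show ?thesis .
    qed
    also have "[(\<Sum>a<m. (\<Sum>c<m. S e c * T c a) * v a) = (\<Sum>a<m. (if e = a then 1 else 0) * v a)] (mod int p)"
    proof (rule cong_sum)
      fix a assume "a \<in> {..<m}"
      then have "[(\<Sum>c<m. S e c * T c a) = (if e = a then 1 else 0)] (mod int p)" using ST True by blast
      then show "[(\<Sum>c<m. S e c * T c a) * v a = (if e = a then 1 else 0) * v a] (mod int p)"
        by (rule cong_scalar_right)
    qed
    also have "(\<Sum>a<m. (if e = a then 1 else 0) * v a) = v e" using True by (simp add: if_mult_delta sum.delta)
    finally have "[(\<Sum>c<m. S e c * matv p m T v c) = v e] (mod int p)" .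
    moreover have "0 \<le> v e" "v e < int p" using v True by (auto simp: VV_def)
    ultimately show ?thesis using True by (simp add: matv_def cong_def)
  next
    case False then show ?thesis using v by (simp add: matv_def VV_def)
  qed
qed

lemma matv_add:
  assumes "p > 0"
  shows "matv p m T (vadd p m v w) = vadd p m (matv p m T v) (matv p m T w)"
proof
  fix c show "matv p m T (vadd p m v w) c = vadd p m (matv p m T v) (matv p m T w) c"
  proof (cases "c < m")
    case True
    have "[(\<Sum>a<m. T c a * vadd p m v w a) = (\<Sum>a<m. T c a * v a) + (\<Sum>a<m. T c a * w a)] (mod int p)"
    proof -
      have "[(\<Sum>a<m. T c a * vadd p m v w a) = (\<Sum>a<m. T c a * v a + T c a * w a)] (mod int p)"
        by (rule cong_sum) (auto simp: vadd_def distrib_left[symmetric] intro: cong_scalar_left)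
      then show ?thesis by (simp add: sum.distrib)
    qed
    then show ?thesis using True by (simp add: matv_def vadd_def cong_def mod_add_eq)
  next
    case False then show ?thesis by (simp add: matv_def vadd_def)
  qed
qed



definition TAT :: "nat \<Rightarrow> (nat \<Rightarrow> nat \<Rightarrow> int) \<Rightarrow> (nat \<Rightarrow> nat \<Rightarrow> int) \<Rightarrow> nat \<Rightarrow> nat \<Rightarrow> int" where
  "TAT m T M a b = (\<Sum>c<m. \<Sum>d<m. T c a * M c d * T d b)"

definition col :: "(nat \<Rightarrow> nat \<Rightarrow> int) \<Rightarrow> nat \<Rightarrow> nat \<Rightarrow> int" where
  "col T a = (\<lambda>i. T i a)"

definition Cm :: "nat \<Rightarrow> (nat \<Rightarrow> nat \<Rightarrow> int) \<Rightarrow> (nat \<Rightarrow> nat \<Rightarrow> int) \<Rightarrow> nat \<Rightarrow> nat \<Rightarrow> int" where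
  "Cm m T M a b = coc m M (col T a) (col T b) - (if a < b then TAT m T M a b else 0)"

definition Csym :: "(nat \<Rightarrow> nat \<Rightarrow> int) \<Rightarrow> nat \<Rightarrow> nat \<Rightarrow> int" where
  "Csym C a b = (if a \<le> b then C a b else C b a)"

lemma Csym_sym: "\<forall>a b. Csym C a b = Csym C b a"
  by (auto simp: Csym_def)

lemma coc_sum_left: "coc m M (\<lambda>i. \<Sum>a<m'. f a i) y = (\<Sum>a<m'. coc m M (f a) y)"
proof -
  have "coc m M (\<lambda>i. \<Sum>a<m'. f a i) y = (\<Sum>j<m. \<Sum>i<j. \<Sum>a<m'. f a i * y j * M i j)"
    unfolding coc_def by (simp add: sum_distrib_right)
  also have "\<dots> = (\<Sum>j<m. \<Sum>a<m'. \<Sum>i<j. f a i * y j * M i j)"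
    by (rule sum.cong[OF refl]) (rule sum.swap)
  also have "\<dots> = (\<Sum>a<m'. \<Sum>j<m. \<Sum>i<j. f a i * y j * M i j)" by (rule sum.swap)
  finally show ?thesis unfolding coc_def .
qed

lemma coc_sum_right: "coc m M x (\<lambda>i. \<Sum>a<m'. f a i) = (\<Sum>a<m'. coc m M x (f a))"
proof -
  have "coc m M x (\<lambda>i. \<Sum>a<m'. f a i) = (\<Sum>j<m. \<Sum>i<j. \<Sum>a<m'. x i * f a j * M i j)"
    unfolding coc_def by (simp add: sum_distrib_left sum_distrib_right)
  also have "\<dots> = (\<Sum>j<m. \<Sum>a<m'. \<Sum>i<j. x i * f a j * M i j)"
    by (rule sum.cong[OF refl]) (rule sum.swap)
  also have "\<dots> = (\<Sum>a<m'. \<Sum>j<m. \<Sum>i<j. x i * f a j * M i j)" by (rule sum.swap)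
  finally show ?thesis unfolding coc_def .
qed

lemma coc_smult_left: "coc m M (\<lambda>i. c * x i) y = c * coc m M x y"
  unfolding coc_def by (simp add: sum_distrib_left mult_ac)

lemma coc_smult_right: "coc m M x (\<lambda>i. c * y i) = c * coc m M x y"
  unfolding coc_def by (simp add: sum_distrib_left mult_ac)

lemma coc_Tv:
  "coc m M (\<lambda>c. \<Sum>a<m. T c a * v a) (\<lambda>c. \<Sum>b<m. T c b * w b) =
   (\<Sum>a<m. \<Sum>b<m. v a * w b * coc m M (col T a) (col T b))"
proof -
  have "coc m M (\<lambda>c. \<Sum>a<m. T c a * v a) (\<lambda>c. \<Sum>b<m. T c b * w b)
      = (\<Sum>a<m. coc m M (\<lambda>c. v a * col T a c) (\<lambda>c. \<Sum>b<m. T c b * w b))"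
    using coc_sum_left[of m M "\<lambda>a c. v a * col T a c" m] by (simp add: col_def mult_ac)
  also have "\<dots> = (\<Sum>a<m. v a * coc m M (col T a) (\<lambda>c. \<Sum>b<m. T c b * w b))"
    by (simp only: coc_smult_left)
  also have "\<dots> = (\<Sum>a<m. v a * (\<Sum>b<m. coc m M (col T a) (\<lambda>c. w b * col T b c)))"
    using coc_sum_right[of m M _ "\<lambda>b c. w b * col T b c" m] by (simp add: col_def mult_ac)
  also have "\<dots> = (\<Sum>a<m. v a * (\<Sum>b<m. w b * coc m M (col T a) (col T b)))"
    by (simp only: coc_smult_right)
  also have "\<dots> = (\<Sum>a<m. \<Sum>b<m. v a * w b * coc m M (col T a) (col T b))"
    by (simp add: sum_distrib_left mult_ac)
  finally show ?thesis .
qed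

lemma sum_lessThan_if: "(j::nat) \<le> m \<Longrightarrow> (\<Sum>i<j. g i) = (\<Sum>i<m. if i < j then g i else (0::int))"
proof -
  assume "j \<le> m"
  then have e: "{..<j} = {i \<in> {..<m}. i < j}" by auto
  show ?thesis unfolding e by (rule sum.inter_filter) simp
qed

lemma coc_upper: "coc m M v w = (\<Sum>a<m. \<Sum>b<m. v a * w b * (if a < b then M a b else 0))"
proof -
  have "coc m M v w = (\<Sum>b<m. \<Sum>a<m. if a < b then v a * w b * M a b else 0)"
    unfolding coc_def by (rule sum.cong[OF refl]) (simp add: sum_lessThan_if)
  also have "\<dots> = (\<Sum>a<m. \<Sum>b<m. if a < b then v a * w b * M a b else 0)" by (rule sum.swap)
  also have "\<dots> = (\<Sum>a<m. \<Sum>b<m. v a * w b * (if a < b then M a b else 0))"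
    by (intro sum.cong) auto
  finally show ?thesis .
qed

lemma part_II:
  assumes p: "p > 0" and sk: "skew_symmetric_mod p m M"
  shows "[coc m M (matv p m T v) (matv p m T w) - coc m (TAT m T M) v w = B2 m (Csym (Cm m T M)) v w] (mod int p)"
proof -
  have a: "[coc m M (matv p m T v) (matv p m T w) = coc m M (\<lambda>c. \<Sum>a<m. T c a * v a) (\<lambda>c. \<Sum>b<m. T c b * w b)] (mod int p)"
    unfolding coc_def
  proof (rule cong_sum, rule cong_sum)
    fix j i assume ji: "j \<in> {..<m}" "i \<in> {..<j}"
    then have "[matv p m T v i = (\<Sum>a<m. T i a * v a)] (mod int p)" "[matv p m T w j = (\<Sum>b<m. T j b * w b)] (mod int p)"
      by (auto simp: matv_def)
    then show "[matv p m T v i * matv p m T w j * M i j = (\<Sum>a<m. T i a * v a) * (\<Sum>b<m. T j b * w b) * M i j] (mod int p)"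
      by (intro cong_mult cong_refl)
  qed
  have "coc m M (\<lambda>c. \<Sum>a<m. T c a * v a) (\<lambda>c. \<Sum>b<m. T c b * w b) - coc m (TAT m T M) v w
      = (\<Sum>a<m. \<Sum>b<m. v a * w b * Cm m T M a b)"
    unfolding coc_Tv coc_upper[of m "TAT m T M"] Cm_def
    by (simp add: sum_subtractf[symmetric] right_diff_distrib)
  moreover have "[(\<Sum>a<m. \<Sum>b<m. v a * w b * Cm m T M a b) = B2 m (Csym (Cm m T M)) v w] (mod int p)"
    unfolding B2_def
  proof (rule cong_sum, rule cong_sum)
    fix a b assume ab: "a \<in> {..<m}" "b \<in> {..<m}"
    have "[Cm m T M a b = Csym (Cm m T M) a b] (mod int p)"
    proof (cases "a \<le> b")
      case True then show ?thesis by (simp add: Csym_def)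
    next
      case False
      then have ba: "b < a" by simp
      have "[coc m M (col T b) (col T a) - coc m M (col T a) (col T b) = TAT m T M b a] (mod int p)"
        using skew_coc[OF sk, of "col T b" "col T a"] by (simp add: TAT_def col_def)
      then have "[coc m M (col T a) (col T b) - coc m M (col T b) (col T a) + TAT m T M b a
                 = coc m M (col T a) (col T b) - coc m M (col T b) (col T a) + (coc m M (col T b) (col T a) - coc m M (col T a) (col T b))] (mod int p)"
        by (intro cong_add cong_refl) (simp add: cong_sym)
      moreover have "Cm m T M a b - Cm m T M b a = coc m M (col T a) (col T b) - coc m M (col T b) (col T a) + TAT m T M b a"
        using ba by (simp add: Cm_def)
      ultimately have "[Cm m T M a b - Cm m T M b a = 0] (mod int p)" by simp
      then have "[Cm m T M a b = Cm m T M b a] (mod int p)" by (simp add: cong_iff_dvd_diff)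
      then show ?thesis using False by (simp add: Csym_def)
    qed
    then show "[v a * w b * Cm m T M a b = v a * w b * Csym (Cm m T M) a b] (mod int p)"
      by (rule cong_scalar_left)
  qed
  ultimately have "[coc m M (\<lambda>c. \<Sum>a<m. T c a * v a) (\<lambda>c. \<Sum>b<m. T c b * w b) - coc m (TAT m T M) v w
      = B2 m (Csym (Cm m T M)) v w] (mod int p)" by simp
  moreover have "[coc m M (matv p m T v) (matv p m T w) - coc m (TAT m T M) v w =
      coc m M (\<lambda>c. \<Sum>a<m. T c a * v a) (\<lambda>c. \<Sum>b<m. T c b * w b) - coc m (TAT m T M) v w] (mod int p)"
    using a by (intro cong_diff cong_refl)
  ultimately show ?thesis by (rule cong_trans[rotated])
qed

lemma part_I:
  assumes p: "p > 0" and S: "\<forall>a b. S a b = S b a"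
  shows "(2 * int p) dvd (Q2 p m S (vadd p m v w) - Q2 p m S v - Q2 p m S w - 2 * B2 m S v w)"
proof -
  have "Q2 p m S (vadd p m v w) = Q2 p m S (\<lambda>a. (v a + w a) + (- int p) * ((v a + w a) div int p))"
    by (rule Q2_cong) (simp add: vadd_def mod_div_decomp algebra_simps minus_div_mult_eq_mod[symmetric])
  moreover have "(2 * int p) dvd (Q2 p m S (\<lambda>a. (v a + w a) + (- int p) * ((v a + w a) div int p)) - Q2 p m S (\<lambda>a. v a + w a))"
    by (rule Q2_shift[OF S])
  moreover have "Q2 p m S (\<lambda>a. v a + w a) = Q2 p m S v + Q2 p m S w + 2 * B2 m S v w"
    by (rule Q2_add[OF S])
  ultimately show ?thesis by (metis diff_diff_eq)
qed



definition dn :: "nat \<Rightarrow> nat" where "dn p = (if p = 2 then 2 else 1)"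
definition hh :: "nat \<Rightarrow> int" where "hh p = (if p = 2 then 1 else (int p + 1) div 2)"

definition gam :: "nat \<Rightarrow> nat \<Rightarrow> (nat \<Rightarrow> nat \<Rightarrow> int) \<Rightarrow> (nat \<Rightarrow> nat \<Rightarrow> int) \<Rightarrow> (nat \<Rightarrow> int) \<Rightarrow> rat" where
  "gam p m T M v = of_int (hh p * Q2 p m (Csym (Cm m T M)) v) / of_nat (p * dn p)"

lemma gam_pdy: "pdy p (gam p m T M v)"
proof (cases "p = 2")
  case True
  have "gam p m T M v = (of_int (hh p * Q2 p m (Csym (Cm m T M)) v) / of_nat p) / of_nat p"
    using True by (simp add: gam_def dn_def)
  then show ?thesis by (metis pdy_div pdy_of_int_div)
next
  case False
  have "gam p m T M v = of_int (hh p * Q2 p m (Csym (Cm m T M)) v) / of_nat p"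
    using False by (simp only: gam_def dn_def if_False mult_1_right)
  then show ?thesis by (simp only: pdy_of_int_div)
qed

lemma key_div:
  assumes pr: "prime p" and sk: "skew_symmetric_mod p m M"
  shows "int (p * dn p) dvd (hh p * (Q2 p m (Csym (Cm m T M)) (vadd p m v w) - Q2 p m (Csym (Cm m T M)) v - Q2 p m (Csym (Cm m T M)) w)
           - int (dn p) * (coc m M (matv p m T v) (matv p m T w) - coc m (TAT m T M) v w))"
proof -
  have p0: "p > 0" using pr prime_gt_0_nat by blast
  let ?S = "Csym (Cm m T M)"
  define E1 where "E1 = Q2 p m ?S (vadd p m v w) - Q2 p m ?S v - Q2 p m ?S w - 2 * B2 m ?S v w"
  define E2 where "E2 = (coc m M (matv p m T v) (matv p m T w) - coc m (TAT m T M) v w) - B2 m ?S v w"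
  have d1: "(2 * int p) dvd E1" unfolding E1_def by (rule part_I[OF p0 Csym_sym])
  have d2: "int p dvd E2" unfolding E2_def using part_II[OF p0 sk, of T v w] by (simp add: cong_iff_dvd_diff)
  have X: "hh p * (Q2 p m ?S (vadd p m v w) - Q2 p m ?S v - Q2 p m ?S w)
           - int (dn p) * (coc m M (matv p m T v) (matv p m T w) - coc m (TAT m T M) v w)
         = hh p * E1 + (2 * hh p - int (dn p)) * B2 m ?S v w - int (dn p) * E2"
    unfolding E1_def E2_def by (simp add: algebra_simps)
  show ?thesis
  proof (cases "p = 2")
    case True
    then have "hh p = 1" "dn p = 2" by (simp_all add: hh_def dn_def)
    moreover have "int (p * 2) dvd E1" using d1 True by simp
    moreover have "int (p * 2) dvd 2 * E2"
    proof -
      obtain t where "E2 = int p * t" using d2 by (elim dvdE)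
      then show ?thesis using True by simp
    qed
    ultimately show ?thesis unfolding X using True by (simp add: dvd_diff)
  next
    case False
    have "p > 2" using False prime_ge_2_nat[OF pr] by simp
    then have "odd p" using pr prime_odd_nat by blast
    then have "even (int p + 1)" by simp
    then have "2 * ((int p + 1) div 2) = int p + 1" by (rule dvd_mult_div_cancel)
    then have h2: "2 * hh p = int p + 1" using False by (simp add: hh_def)
    have "dn p = 1" using False by (simp add: dn_def)
    moreover have "int p dvd hh p * E1"
    proof -
      have "int p dvd 2 * int p" by simp
      then have "int p dvd E1" using d1 by (rule dvd_trans)
      then show ?thesis by (rule dvd_mult)
    qed
    moreover have "int p dvd (2 * hh p - 1) * B2 m ?S v w" using h2 by simp
    ultimately show ?thesis unfolding X using d2 by (simp add: dvd_diff)
  qed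
qed



lemma frac_frac3: "frac (frac (a::rat) + frac b + c) = frac (a + b + c)"
  unfolding frac_eq_iff_Ints by (simp add: frac_def)

lemma top_iso:
  assumes pr: "prime p" and T: "invertible_mod p m T" and skA: "skew_tuple p n m A"
  shows "chernikov_group p n m (\<lambda>k. TAT m T (A k)) \<cong> chernikov_group p n m A"
proof -
  let ?G = "chernikov_group p n m (\<lambda>k. TAT m T (A k))" and ?H = "chernikov_group p n m A"
  have p0: "p > 0" using pr prime_gt_0_nat by blast
  obtain T' where T': "\<forall>i<m. \<forall>j<m. [(\<Sum>l<m. T i l * T' l j) = (if i = j then 1 else 0)] (mod int p)"
     "\<forall>i<m. \<forall>j<m. [(\<Sum>l<m. T' i l * T l j) = (if i = j then 1 else 0)] (mod int p)"
    using T unfolding invertible_mod_def by blast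
  define \<phi> where "\<phi> g = ((\<lambda>k. if k < n then frac (fst g k + gam p m T (A k) (snd g)) else 0), matv p m T (snd g))"
    for g :: "(nat \<Rightarrow> rat) \<times> (nat \<Rightarrow> int)"
  have C: "\<phi> g \<in> carrier ?H" if "g \<in> carrier ?G" for g
  proof -
    have "fst (\<phi> g) \<in> XX p n" unfolding \<phi>_def fst_conv
      using that by (intro XX_fracI pdy_add gam_pdy) (auto simp: carrier_G XX_pdy)
    moreover have "snd (\<phi> g) \<in> VV p m" unfolding \<phi>_def using matv_VV[OF p0] by simp
    ultimately show ?thesis by (simp add: carrier_G mem_Times_iff)
  qed
  have hom: "\<phi> \<in> hom ?G ?H"
  proof (rule homI)
    show "\<phi> g \<in> carrier ?H" if "g \<in> carrier ?G" for g using C that .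
    show "\<phi> (g \<otimes>\<^bsub>?G\<^esub> h) = \<phi> g \<otimes>\<^bsub>?H\<^esub> \<phi> h" if g: "g \<in> carrier ?G" and h: "h \<in> carrier ?G" for g h
    proof -
      obtain x v where gxv: "g = (x, v)" by (cases g)
      obtain y w where hyw: "h = (y, w)" by (cases h)
      have fst_eq: "frac ((if k < n then frac (x k + y k + of_int (cocycle m (\<lambda>k. TAT m T (A k)) k v w) / of_nat p) else 0)
                 + gam p m T (A k) (vadd p m v w))
            = frac ((if k < n then frac (x k + gam p m T (A k) v) else 0) + (if k < n then frac (y k + gam p m T (A k) w) else 0)
                 + of_int (cocycle m A k (matv p m T v) (matv p m T w)) / of_nat p)" if k: "k < n" for k
      proof -
        have sk: "skew_symmetric_mod p m (A k)" using skA k by (simp add: skew_tuple_def)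
        let ?S = "Csym (Cm m T (A k))"
        let ?X = "hh p * (Q2 p m ?S (vadd p m v w) - Q2 p m ?S v - Q2 p m ?S w)
           - int (dn p) * (coc m (A k) (matv p m T v) (matv p m T w) - coc m (TAT m T (A k)) v w)"
        have dnp: "dn p > 0" by (simp add: dn_def)
        have D: "(x k + y k + of_int (coc m (TAT m T (A k)) v w) / of_nat p + gam p m T (A k) (vadd p m v w))
              - (x k + gam p m T (A k) v + (y k + gam p m T (A k) w) + of_int (coc m (A k) (matv p m T v) (matv p m T w)) / of_nat p)
              = of_int ?X / of_nat (p * dn p)"
          using p0 dnp by (simp add: gam_def field_simps)
        have "of_int ?X / of_nat (p * dn p) \<in> (\<int> :: rat set)"
          using key_div[OF pr sk, of T v w] by (rule dvd_div_Ints)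
        then have "frac (x k + y k + of_int (coc m (TAT m T (A k)) v w) / of_nat p + gam p m T (A k) (vadd p m v w))
          = frac (x k + gam p m T (A k) v + (y k + gam p m T (A k) w) + of_int (coc m (A k) (matv p m T v) (matv p m T w)) / of_nat p)"
          unfolding frac_eq_iff_Ints D .
        moreover have e1: "frac (frac (x k + y k + of_int (coc m (TAT m T (A k)) v w) / of_nat p) + gam p m T (A k) (vadd p m v w))
           = frac (x k + y k + of_int (coc m (TAT m T (A k)) v w) / of_nat p + gam p m T (A k) (vadd p m v w))"
          by (rule frac_frac_add)
        moreover have e2: "frac (frac (x k + gam p m T (A k) v) + frac (y k + gam p m T (A k) w) + of_int (coc m (A k) (matv p m T v) (matv p m T w)) / of_nat p)
           = frac (x k + gam p m T (A k) v + (y k + gam p m T (A k) w) + of_int (coc m (A k) (matv p m T v) (matv p m T w)) / of_nat p)"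
          by (rule frac_frac3)
        ultimately show ?thesis unfolding cocycle_coc using k by (simp only: if_True)
      qed
      have F: "(\<lambda>k. if k < n then frac ((if k < n then frac (x k + y k + of_int (cocycle m (\<lambda>k. TAT m T (A k)) k v w) / of_nat p) else 0)
                 + gam p m T (A k) (vadd p m v w)) else 0)
            = (\<lambda>k. if k < n then frac ((if k < n then frac (x k + gam p m T (A k) v) else 0) + (if k < n then frac (y k + gam p m T (A k) w) else 0)
                 + of_int (cocycle m A k (matv p m T v) (matv p m T w)) / of_nat p) else 0)"
      proof (rule ext)
        fix k show "(if k < n then frac ((if k < n then frac (x k + y k + of_int (cocycle m (\<lambda>k. TAT m T (A k)) k v w) / of_nat p) else 0)
                 + gam p m T (A k) (vadd p m v w)) else 0)
            = (if k < n then frac ((if k < n then frac (x k + gam p m T (A k) v) else 0) + (if k < n then frac (y k + gam p m T (A k) w) else 0)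
                 + of_int (cocycle m A k (matv p m T v) (matv p m T w)) / of_nat p) else 0)"
        proof (cases "k < n")
          case True
          show ?thesis using fst_eq[OF True] True by (simp only: if_True)
        next
          case False then show ?thesis by simp
        qed
      qed
      show ?thesis unfolding gxv hyw \<phi>_def
        by (simp only: mult_G fst_conv snd_conv matv_add[OF p0] F)
    qed
  qed
  have mTT: "matv p m T' (matv p m T v) = v" if "v \<in> VV p m" for v using matv_inv[OF p0 T'(2) that] .
  have mTT': "matv p m T (matv p m T' v) = v" if "v \<in> VV p m" for v using matv_inv[OF p0 T'(1) that] .
  have inj: "inj_on \<phi> (carrier ?G)"
  proof (rule inj_onI)
    fix g h assume g: "g \<in> carrier ?G" and h: "h \<in> carrier ?G" and e: "\<phi> g = \<phi> h"
    obtain x v where gxv: "g = (x, v)" by (cases g)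
    obtain y w where hyw: "h = (y, w)" by (cases h)
    have x: "x \<in> XX p n" and v: "v \<in> VV p m" using g gxv by (auto simp: carrier_G)
    have y: "y \<in> XX p n" and w: "w \<in> VV p m" using h hyw by (auto simp: carrier_G)
    have "matv p m T v = matv p m T w" using e gxv hyw by (simp add: \<phi>_def)
    then have vw: "v = w" using mTT[OF v] mTT[OF w] by metis
    have F: "(\<lambda>k. if k < n then frac (x k + gam p m T (A k) v) else 0) = (\<lambda>k. if k < n then frac (y k + gam p m T (A k) v) else 0)"
      using e gxv hyw vw by (simp add: \<phi>_def cong: if_cong)
    have "x = y"
    proof
      fix k show "x k = y k"
      proof (cases "k < n")
        case True
        then have "frac (x k + gam p m T (A k) v) = frac (y k + gam p m T (A k) v)" using fun_cong[OF F, of k] by simp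
        then have "x k - y k \<in> \<int>" unfolding frac_eq_iff_Ints by simp
        then have "frac (x k) = frac (y k)" unfolding frac_eq_iff_Ints .
        then show ?thesis using XX_frac[OF x True] XX_frac[OF y True] by simp
      next
        case False then show ?thesis using x y by (simp add: XX_def)
      qed
    qed
    then show "g = h" using gxv hyw vw by simp
  qed
  have surj: "\<phi> ` carrier ?G = carrier ?H"
  proof
    show "\<phi> ` carrier ?G \<subseteq> carrier ?H" using C by blast
    show "carrier ?H \<subseteq> \<phi> ` carrier ?G"
    proof
      fix h assume h: "h \<in> carrier ?H"
      obtain y u where hyu: "h = (y, u)" by (cases h)
      have y: "y \<in> XX p n" and u: "u \<in> VV p m" using h hyu by (auto simp: carrier_G)
      define v where "v = matv p m T' u"
      have v: "v \<in> VV p m" unfolding v_def by (rule matv_VV[OF p0])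
      have Tv: "matv p m T v = u" unfolding v_def by (rule mTT'[OF u])
      define x where "x = (\<lambda>k. if k < n then frac (y k - gam p m T (A k) v) else 0)"
      have x: "x \<in> XX p n" unfolding x_def using y by (intro XX_fracI pdy_diff gam_pdy) (auto simp: XX_pdy)
      have "(\<lambda>k. if k < n then frac (x k + gam p m T (A k) v) else 0) = y"
      proof
        fix k show "(if k < n then frac (x k + gam p m T (A k) v) else 0) = y k"
        proof (cases "k < n")
          case True
          have "frac (x k + gam p m T (A k) v) = frac (y k - gam p m T (A k) v + gam p m T (A k) v)"
            using True by (simp add: x_def frac_frac_add)
          also have "\<dots> = y k" using XX_frac[OF y True] by simp
          finally show ?thesis using True by simp
        next
          case False then show ?thesis using y by (simp add: XX_def)
        qed
      qed
      then have "\<phi> (x, v) = h" using hyu Tv by (simp add: \<phi>_def cong: if_cong)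
      moreover have "(x, v) \<in> carrier ?G" using x v by (simp add: carrier_G)
      ultimately show "h \<in> \<phi> ` carrier ?G" by force
    qed
  qed
  have "\<phi> \<in> iso ?G ?H" using hom inj surj by (simp add: iso_def bij_betw_def)
  then show ?thesis by (rule is_isoI)
qed



lemma invertible_transpose:
  assumes "invertible_mod p d P" shows "invertible_mod p d (\<lambda>i j. P j i)"
proof -
  obtain P' where P': "\<forall>i<d. \<forall>j<d. [(\<Sum>l<d. P i l * P' l j) = (if i = j then 1 else 0)] (mod int p) \<and>
     [(\<Sum>l<d. P' i l * P l j) = (if i = j then 1 else 0)] (mod int p)"
    using assms unfolding invertible_mod_def by blast
  show ?thesis unfolding invertible_mod_def
  proof (intro exI[of _ "\<lambda>i j. P' j i"] allI impI conjI)
    fix i j assume ij: "i < d" "j < d"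
    have "[(\<Sum>l<d. P' j l * P l i) = (if j = i then 1 else 0)] (mod int p)" using P' ij by blast
    then show "[(\<Sum>l<d. P l i * P' j l) = (if i = j then 1 else 0)] (mod int p)"
      by (simp add: mult.commute eq_commute[of i j])
    have "[(\<Sum>l<d. P j l * P' l i) = (if j = i then 1 else 0)] (mod int p)" using P' ij by blast
    then show "[(\<Sum>l<d. P' l i * P j l) = (if i = j then 1 else 0)] (mod int p)"
      by (simp add: mult.commute eq_commute[of i j])
  qed
qed

lemma skew_comb:
  assumes "skew_tuple p n m A"
  shows "skew_tuple p n m (\<lambda>j a b. \<Sum>i<n. Q i j * A i a b)"
  unfolding skew_tuple_def skew_symmetric_mod_def
proof (intro allI impI)
  fix j x assume j: "j < n"
  have "(\<Sum>a<m. \<Sum>b<m. x a * (\<Sum>i<n. Q i j * A i a b) * x b) = (\<Sum>a<m. \<Sum>b<m. \<Sum>i<n. Q i j * (x a * A i a b * x b))"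
    by (simp add: sum_distrib_left sum_distrib_right mult_ac)
  also have "\<dots> = (\<Sum>a<m. \<Sum>i<n. \<Sum>b<m. Q i j * (x a * A i a b * x b))"
    by (rule sum.cong[OF refl]) (rule sum.swap)
  also have "\<dots> = (\<Sum>i<n. \<Sum>a<m. \<Sum>b<m. Q i j * (x a * A i a b * x b))" by (rule sum.swap)
  also have "\<dots> = (\<Sum>i<n. Q i j * (\<Sum>a<m. \<Sum>b<m. x a * A i a b * x b))" by (simp add: sum_distrib_left)
  also have "[\<dots> = (\<Sum>i<n. Q i j * 0)] (mod int p)"
  proof (rule cong_sum)
    fix i assume "i \<in> {..<n}"
    then have "[(\<Sum>a<m. \<Sum>b<m. x a * A i a b * x b) = 0] (mod int p)"
      using assms unfolding skew_tuple_def skew_symmetric_mod_def by blast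
    then show "[Q i j * (\<Sum>a<m. \<Sum>b<m. x a * A i a b * x b) = Q i j * 0] (mod int p)" by (rule cong_scalar_left)
  qed
  finally show "[(\<Sum>a<m. \<Sum>b<m. x a * (\<Sum>i<n. Q i j * A i a b) * x b) = 0] (mod int p)" by simp
qed

lemma backward:
  assumes pr: "prime p" and skA: "skew_tuple p n m A" and wc: "weakly_congruent p n m A A'"
  shows "chernikov_group p n m A \<cong> chernikov_group p n m A'"
proof -
  have p1: "p > 1" using pr prime_gt_1_nat by blast
  then have p0: "p > 0" by simp
  obtain P Q where P: "invertible_mod p m P" and Q: "invertible_mod p n Q"
    and E: "\<forall>j<n. \<forall>a<m. \<forall>b<m. [A' j a b = (\<Sum>i<n. Q i j * (\<Sum>c<m. \<Sum>d<m. P a c * A i c d * P b d))] (mod int p)"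
    using wc unfolding weakly_congruent_def by blast
  define AQ where "AQ = (\<lambda>j a b. \<Sum>i<n. Q i j * A i a b)"
  have 1: "chernikov_group p n m A \<cong> chernikov_group p n m AQ"
    unfolding AQ_def by (rule bottom_iso[OF p1 Q])
  have skAQ: "skew_tuple p n m AQ" unfolding AQ_def by (rule skew_comb[OF skA])
  define T where "T = (\<lambda>c a. P a c)"
  have Tinv: "invertible_mod p m T" unfolding T_def by (rule invertible_transpose[OF P])
  have 2: "chernikov_group p n m (\<lambda>k. TAT m T (AQ k)) \<cong> chernikov_group p n m AQ"
    by (rule top_iso[OF pr Tinv skAQ])
  have 3: "chernikov_group p n m (\<lambda>k. TAT m T (AQ k)) = chernikov_group p n m A'"
  proof (rule cong_group, intro allI impI)
    fix k a b assume k: "k < n" and a: "a < m" and b: "b < m"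
    have "TAT m T (AQ k) a b = (\<Sum>c<m. \<Sum>d<m. \<Sum>i<n. Q i k * (P a c * A i c d * P b d))"
      unfolding TAT_def T_def AQ_def by (simp add: sum_distrib_left sum_distrib_right mult_ac)
    also have "\<dots> = (\<Sum>c<m. \<Sum>i<n. \<Sum>d<m. Q i k * (P a c * A i c d * P b d))"
      by (rule sum.cong[OF refl]) (rule sum.swap)
    also have "\<dots> = (\<Sum>i<n. \<Sum>c<m. \<Sum>d<m. Q i k * (P a c * A i c d * P b d))" by (rule sum.swap)
    also have "\<dots> = (\<Sum>i<n. Q i k * (\<Sum>c<m. \<Sum>d<m. P a c * A i c d * P b d))" by (simp add: sum_distrib_left)
    finally have "TAT m T (AQ k) a b = (\<Sum>i<n. Q i k * (\<Sum>c<m. \<Sum>d<m. P a c * A i c d * P b d))" .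
    then show "[TAT m T (AQ k) a b = A' k a b] (mod int p)" using E k a b by (simp add: cong_sym)
  qed
  have clo: "\<And>x y. x \<in> carrier (chernikov_group p n m (\<lambda>k. TAT m T (AQ k))) \<Longrightarrow> y \<in> carrier (chernikov_group p n m (\<lambda>k. TAT m T (AQ k))) \<Longrightarrow>
      x \<otimes>\<^bsub>chernikov_group p n m (\<lambda>k. TAT m T (AQ k))\<^esub> y \<in> carrier (chernikov_group p n m (\<lambda>k. TAT m T (AQ k)))"
    using mult_closed_G[OF _ _ p0] by blast
  have 4: "chernikov_group p n m AQ \<cong> chernikov_group p n m A'"
  proof -
    obtain h where hI: "h \<in> iso (chernikov_group p n m (\<lambda>k. TAT m T (AQ k))) (chernikov_group p n m AQ)"
      using 2 unfolding is_iso_def by blast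
    have "inv_into (carrier (chernikov_group p n m (\<lambda>k. TAT m T (AQ k)))) h \<in> iso (chernikov_group p n m AQ) (chernikov_group p n m (\<lambda>k. TAT m T (AQ k)))"
      using iso_inv_gen[OF clo hI] .
    then show ?thesis unfolding 3 by (rule is_isoI)
  qed
  show ?thesis using 1 4 by (rule iso_trans)
qed

theorem corollary1p3:
  fixes p n m :: nat and A A' :: "nat \<Rightarrow> nat \<Rightarrow> nat \<Rightarrow> int"
  assumes "prime p"
    and "skew_tuple p n m A"
    and "skew_tuple p n m A'"
  shows "chernikov_group p n m A \<cong> chernikov_group p n m A' \<longleftrightarrow> weakly_congruent p n m A A'"
proof
  assume "chernikov_group p n m A \<cong> chernikov_group p n m A'"
  then obtain \<phi> where "\<phi> \<in> iso (chernikov_group p n m A) (chernikov_group p n m A')"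
    unfolding is_iso_def by blast
  then show "weakly_congruent p n m A A'" using forward assms by blast
next
  assume "weakly_congruent p n m A A'"
  then show "chernikov_group p n m A \<cong> chernikov_group p n m A'" using backward assms by blast
qed

end
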